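(* Consider any sequences $\{(x_k,y_k,\gamma_k)\}_{k\ge0}$, $\{(\tilde x_k,u_k,\tilde\gamma_k)\}_{k\ge1}$ generated by the inexact symmetric proximal ADMM described in the context, and define for $i\ge1$ $$v_i=\Big(H+\tfrac{(\tau-\tau\theta+\theta)\beta}{\tau+\theta}B^*B\Big)(y_{i-1}-y_i)-\tfrac{\tau}{\tau+\theta}B^*(\gamma_{i-1}-\gamma_i),\qquad w_i=-\tfrac{\tau}{\tau+\theta}B(y_{i-1}-y_i)+\tfrac{1}{(\tau+\theta)\beta}(\gamma_{i-1}-\gamma_i).$$ For $k\ge1$ define the ergodic quantities $(x^a_k,y^a_k,\gamma^a_k,\tilde x^a_k,\tilde\gamma^a_k)=\frac1k\sum_{i=1}^k(x_i,y_i,\gamma_i,\tilde x_i,\tilde\gamma_i)$, $(u^a_k,v^a_k,w^a_k)=\frac1k\sum_{i=1}^k(u_i,v_i,w_i)$, $$\varepsilon^a_k=\frac1k\sum_{i=1}^k\langle u_i+A^*\tilde\gamma_i,\tilde x_i-\tilde x^a_k\rangle,\qquad \zeta^a_k=\frac1k\sum_{i=1}^k\langle v_i+B^*\tilde\gamma_i,y_i-y^a_k\rangle.$$ Let $\sigma\in[\hat\sigma,1)$ be a scalar with $\varphi(\sigma)\ge0$, $\widehat\varphi(\sigma)\ge0$, $\widetilde\varphi(\sigma)>0$, $\overline\varphi(\sigma)\ge0$ (such $\sigma$ exists). Then for every $k\ge1$: $\varepsilon^a_k\ge0$, $\zeta^a_k\ge0$, $$u^a_k\in\partial_{\varepsilon^a_k}f(\tilde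 x^a_k)-A^*\tilde\gamma^a_k,\qquad v^a_k\in\partial_{\zeta^a_k}g(y^a_k)-B^*\tilde\gamma^a_k,\qquad w^a_k=A\tilde x^a_k+By^a_k-b,$$ and $$\max\{\|u^a_k\|,\|v^a_k\|,\|w^a_k\|\}\le\frac{2\sqrt{\lambda_Md_0\mathcal C_2}}{k},\qquad \max\{\varepsilon^a_k,\zeta^a_k\}\le\frac{3d_0\mathcal C_3}{2k},$$ where $\mathcal C_2=1+\frac{4(1+\tau+\vartheta)\varphi(\sigma)}{(\tau+\theta)(1+\tau)\vartheta}$, $\mathcal C_3=(3-2\sigma)\mathcal C_2/(1-\sigma)$, and $\lambda_M$ is the largest eigenvalue of $M$.
   Context: Let $f:\mathbb{R}^n\to(-\infty,\infty]$ and $g:\mathbb{R}^p\to(-\infty,\infty]$ be proper closed convex functions, $A\in\mathbb{R}^{m\times n}$, $B\in\mathbb{R}^{m\times p}$, $b\in\mathbb{R}^m$ (problem: $\min\{f(x)+g(y):Ax+By=b\}$). Standing assumption: there exists $(x^*,y^*,\gamma^* )$ solving the Lagrangian system $0\in\partial f(x)-A^*\gamma$, $0\in\partial g(y)-B^*\gamma$, $0=Ax+By-b$. Here $\partial$ is the subdifferential, and for $\varepsilon\ge0$ the $\varepsilon$-subdifferential is $\partial_\varepsilon h(x)=\{u: h(\tilde x)\ge h(x)+\langle u,\tilde x-x\rangle-\varepsilon\ \forall\tilde x\}$; $A^*$ is the transpose, $\mathbb{S}^n_{++}$ ($\mathbb{S}^p_+$) the symmetric positive definite (semidefinite) matrices,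 and $\|z\|_Q=\sqrt{\langle Qz,z\rangle}$ for $Q$ positive semidefinite. Algorithm (inexact symmetric proximal ADMM): given $(x_0,y_0,\gamma_0)\in\mathbb{R}^n\times\mathbb{R}^p\times\mathbb{R}^m$, $\beta>0$, $\tilde\sigma,\hat\sigma\in[0,1)$, $G\in\mathbb{S}^n_{++}$, $H\in\mathbb{S}^p_+$, and $(\tau,\theta)\in\mathcal R_{\tilde\sigma}:=\{(\tau,\theta):\tau\in(-1,1-\tilde\sigma),\ \tau+\theta>0,\ (1-\tau^2)(2-\tau-\theta-\tilde\sigma)-(1-\theta)^2(1-\tau-\tilde\sigma)>0\}$. For $k=1,2,\dots$: compute $(\tilde x_k,u_k)$ with $u_k\in\partial f(\tilde x_k)-A^*\tilde\gamma_k$ and $\|\tilde x_k-x_{k-1}+G^{-1}u_k\|_G^2\le\frac{\tilde\sigma}{\beta}\|\tilde\gamma_k-\gamma_{k-1}\|^2+\hat\sigma\|\tilde x_k-x_{k-1}\|_G^2$, where $\tilde\gamma_k=\gamma_{k-1}-\beta(A\tilde x_k+By_{k-1}-b)$; set $\gamma_{k-1/2}=\gamma_{k-1}-\tau\beta(A\tilde x_k+By_{k-1}-b)$; let $y_k$ be an optimal solution of $\min_y\{g(y)-\langle\gamma_{k-1/2},By\rangle+\frac\beta2\|A\tilde x_k+By-b\|^2+\frac12\|y-y_{k-1}\|_H^2\}$; set $x_k=x_{k-1}-G^{-1}u_k$ and $\gamma_k=\gamma_{k-1/2}-\theta\beta(A\tilde x_k+By_k-b)$. Definitions: $T(x,y,\gamma)=(\partial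 f(x)-A^*\gamma,\ \partial g(y)-B^*\gamma,\ Ax+By-b)$; $M=\begin{bmatrix}G&0&0\\0&H+\frac{(\tau-\tau\theta+\theta)\beta}{\tau+\theta}B^*B&-\frac{\tau}{\tau+\theta}B^*\\0&-\frac{\tau}{\tau+\theta}B&\frac{1}{(\tau+\theta)\beta}I\end{bmatrix}$; $z_0=(x_0,y_0,\gamma_0)$; $d_0=\inf\{\|z^*-z_0\|_M^2: z^*\in T^{-1}(0)\}$; $\vartheta=\sqrt{(3-3\tau-2\tilde\sigma)(4-\tau-\theta-2\tilde\sigma)}-2(1-\tau-\tilde\sigma)$; and for $\sigma\in\mathbb{R}$: $\varphi(\sigma)=(1-\tau)(\sigma-1)+(1-\tau-\tilde\sigma)(\tau+\theta)$, $\widehat\varphi(\sigma)=(1-\tau)[(1+\theta)\sigma-1+\tau]-\tilde\sigma(\tau+\theta)$, $\widetilde\varphi(\sigma)=\sigma-(1-\tau-\theta)^2-\tilde\sigma(\tau+\theta)$, $\overline\varphi(\sigma)=[(1+\tau)\widehat\varphi(\sigma)-2\tau\varphi(\sigma)](1+\tau)\widetilde\varphi(\sigma)-(1-\theta)^2\varphi(\sigma)^2$. *)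

theory Defs
  imports "HOL-Analysis.Analysis"
begin

text \<open>Extended-real valued functions f : R^n -> (-inf, +inf] are modelled as
  functions into ereal that never take the value -infinity.\<close>

definition proper_fun :: "('a \<Rightarrow> ereal) \<Rightarrow> bool" where
  "proper_fun h \<longleftrightarrow> (\<forall>x. h x \<noteq> -\<infinity>) \<and> (\<exists>x. h x \<noteq> \<infinity>)"

definition convex_fun :: "('a::real_vector \<Rightarrow> ereal) \<Rightarrow> bool" where
  "convex_fun h \<longleftrightarrow> (\<forall>x y t. 0 < t \<and> t < 1 \<longrightarrow>
      h ((1 - t) *\<^sub>R x + t *\<^sub>R y) \<le> ereal (1 - t) * h x + ereal t * h y)"

definition closed_fun :: "('a::topological_space \<Rightarrow> ereal) \<Rightarrow> bool" where
  "closed_fun h \<longleftrightarrow> closed {(x, t::real). h x \<le> ereal t}"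

definition proper_closed_convex :: "('a::real_normed_vector \<Rightarrow> ereal) \<Rightarrow> bool" where
  "proper_closed_convex h \<longleftrightarrow> proper_fun h \<and> closed_fun h \<and> convex_fun h"

definition eps_subdiff :: "('a::real_inner \<Rightarrow> ereal) \<Rightarrow> real \<Rightarrow> 'a \<Rightarrow> 'a set" where
  "eps_subdiff h \<epsilon> x = {u. \<forall>z. h z \<ge> h x + ereal (inner u (z - x) - \<epsilon>)}"

definition subdiff :: "('a::real_inner \<Rightarrow> ereal) \<Rightarrow> 'a \<Rightarrow> 'a set" where
  "subdiff h x = eps_subdiff h 0 x"

definition qnorm2 :: "real^'n^'n \<Rightarrow> real^'n \<Rightarrow> real" where
  "qnorm2 Q z = inner (Q *v z) z"

definition sym_pd :: "real^'n^'n \<Rightarrow> bool" where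
  "sym_pd Q \<longleftrightarrow> transpose Q = Q \<and> (\<forall>z. z \<noteq> 0 \<longrightarrow> inner (Q *v z) z > 0)"

definition sym_psd :: "real^'n^'n \<Rightarrow> bool" where
  "sym_psd Q \<longleftrightarrow> transpose Q = Q \<and> (\<forall>z. inner (Q *v z) z \<ge> 0)"

definition lambda_max :: "real^'n^'n \<Rightarrow> real" where
  "lambda_max Q = Max {l. \<exists>v. v \<noteq> 0 \<and> Q *v v = l *\<^sub>R v}"

text \<open>Vectors on the product space R^n x R^p x R^m, indexed by 'n + 'p + 'm\<close>
definition blk3 :: "real^'n \<Rightarrow> real^'p \<Rightarrow> real^'m \<Rightarrow> real^('n + 'p + 'm)" where
  "blk3 x y g = (\<chi> i. case i of Inl a \<Rightarrow> x $ a | Inr (Inl b) \<Rightarrow> y $ b | Inr (Inr c) \<Rightarrow> g $ c)"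

definition blkmat3 ::
  "real^'n^'n \<Rightarrow> real^'p^'n \<Rightarrow> real^'m^'n \<Rightarrow>
   real^'n^'p \<Rightarrow> real^'p^'p \<Rightarrow> real^'m^'p \<Rightarrow>
   real^'n^'m \<Rightarrow> real^'p^'m \<Rightarrow> real^'m^'m \<Rightarrow> real^('n + 'p + 'm)^('n + 'p + 'm)" where
  "blkmat3 M11 M12 M13 M21 M22 M23 M31 M32 M33 = (\<chi> i j.
     case i of
       Inl a \<Rightarrow> (case j of Inl a' \<Rightarrow> M11 $ a $ a' | Inr (Inl b') \<Rightarrow> M12 $ a $ b' | Inr (Inr c') \<Rightarrow> M13 $ a $ c')
     | Inr (Inl b) \<Rightarrow> (case j of Inl a' \<Rightarrow> M21 $ b $ a' | Inr (Inl b') \<Rightarrow> M22 $ b $ b' | Inr (Inr c') \<Rightarrow> M23 $ b $ c')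
     | Inr (Inr c) \<Rightarrow> (case j of Inl a' \<Rightarrow> M31 $ c $ a' | Inr (Inl b') \<Rightarrow> M32 $ c $ b' | Inr (Inr c') \<Rightarrow> M33 $ c $ c'))"

definition Mmat :: "real^'n^'n \<Rightarrow> real^'p^'p \<Rightarrow> real^'p^'m \<Rightarrow> real \<Rightarrow> real \<Rightarrow> real
                    \<Rightarrow> real^('n + 'p + 'm)^('n + 'p + 'm)" where
  "Mmat G H B \<beta> \<tau> \<theta> = blkmat3
     G 0 0
     0 (H + (((\<tau> - \<tau> * \<theta> + \<theta>) * \<beta>) / (\<tau> + \<theta>)) *\<^sub>R (transpose B ** B)) ((- \<tau> / (\<tau> + \<theta>)) *\<^sub>R transpose B)
     0 ((- \<tau> / (\<tau> + \<theta>)) *\<^sub>R B) ((1 / ((\<tau> + \<theta>) * \<beta>)) *\<^sub>R mat 1)"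

definition region_R :: "real \<Rightarrow> (real \<times> real) set" where
  "region_R st = {(\<tau>, \<theta>). -1 < \<tau> \<and> \<tau> < 1 - st \<and> \<tau> + \<theta> > 0 \<and>
      (1 - \<tau>^2) * (2 - \<tau> - \<theta> - st) - (1 - \<theta>)^2 * (1 - \<tau> - st) > 0}"

definition vartheta :: "real \<Rightarrow> real \<Rightarrow> real \<Rightarrow> real" where
  "vartheta st \<tau> \<theta> = sqrt ((3 - 3 * \<tau> - 2 * st) * (4 - \<tau> - \<theta> - 2 * st)) - 2 * (1 - \<tau> - st)"

definition phi :: "real \<Rightarrow> real \<Rightarrow> real \<Rightarrow> real \<Rightarrow> real" where
  "phi st \<tau> \<theta> \<sigma> = (1 - \<tau>) * (\<sigma> - 1) + (1 - \<tau> - st) * (\<tau> + \<theta>)"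

definition phi_hat :: "real \<Rightarrow> real \<Rightarrow> real \<Rightarrow> real \<Rightarrow> real" where
  "phi_hat st \<tau> \<theta> \<sigma> = (1 - \<tau>) * ((1 + \<theta>) * \<sigma> - 1 + \<tau>) - st * (\<tau> + \<theta>)"

definition phi_tilde :: "real \<Rightarrow> real \<Rightarrow> real \<Rightarrow> real \<Rightarrow> real" where
  "phi_tilde st \<tau> \<theta> \<sigma> = \<sigma> - (1 - \<tau> - \<theta>)^2 - st * (\<tau> + \<theta>)"

definition phi_bar :: "real \<Rightarrow> real \<Rightarrow> real \<Rightarrow> real \<Rightarrow> real" where
  "phi_bar st \<tau> \<theta> \<sigma> =
     ((1 + \<tau>) * phi_hat st \<tau> \<theta> \<sigma> - 2 * \<tau> * phi st \<tau> \<theta> \<sigma>) * (1 + \<tau>) * phi_tilde st \<tau> \<theta> \<sigma>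
     - (1 - \<theta>)^2 * (phi st \<tau> \<theta> \<sigma>)^2"

definition avg :: "nat \<Rightarrow> (nat \<Rightarrow> 'a::real_vector) \<Rightarrow> 'a" where
  "avg k s = (1 / real k) *\<^sub>R (\<Sum>i = 1..k. s i)"

end

theory Submission
  imports Defs
begin

declare transpose_matrix_vector[simp del]

lemma scaleR_mat_mult: "(c *\<^sub>R A) *v x = c *\<^sub>R (A *v (x::real^'n))" for A :: "real^'n^'m"
  by (simp add: vec_eq_iff matrix_vector_mult_def sum_distrib_left mult.assoc)
lemma uminus_mat_mult: "(- A) *v x = - (A *v (x::real^'n))" for A :: "real^'n^'m"
  by (simp add: vec_eq_iff matrix_vector_mult_def sum_negf)

lemma adjA: "inner (A *v x) y = inner x (transpose A *v (y::real^'m))" for A :: "real^'n^'m"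
  by (metis dot_lmul_matrix inner_commute transpose_matrix_vector)

lemma sum_UNIV_Plus: "(\<Sum>i\<in>(UNIV::('a::finite + 'b::finite) set). f i) = (\<Sum>a\<in>UNIV. f (Inl a)) + (\<Sum>b\<in>UNIV. f (Inr b))"
  using sum.Plus[of "UNIV::'a set" "UNIV::'b set" f] by (simp add: comp_def)

lemma blk3_comp:
  "blk3 x y g $ Inl a = x $ a" "blk3 x y g $ Inr (Inl b) = y $ b" "blk3 x y g $ Inr (Inr c) = g $ c"
  by (simp_all add: blk3_def)

lemma blk3_inner: "inner (blk3 x y g) (blk3 x' y' g') = inner x x' + inner y y' + inner g g'"
  by (simp add: inner_vec_def sum_UNIV_Plus blk3_comp)

lemma blk3_add: "blk3 x y g + blk3 x' y' g' = blk3 (x+x') (y+y') (g+g')"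
  by (simp add: vec_eq_iff blk3_def split: sum.split)
lemma blk3_diff: "blk3 x y g - blk3 x' y' g' = blk3 (x-x') (y-y') (g-g')"
  by (simp add: vec_eq_iff blk3_def split: sum.split)
lemma blk3_scaleR: "c *\<^sub>R blk3 x y g = blk3 (c *\<^sub>R x) (c *\<^sub>R y) (c *\<^sub>R g)"
  by (simp add: vec_eq_iff blk3_def split: sum.split)
lemma blk3_zero: "blk3 0 0 0 = 0"
  by (simp add: vec_eq_iff blk3_def split: sum.split)
lemma blk3_sum: "finite S \<Longrightarrow> (\<Sum>i\<in>S. blk3 (x i) (y i) (g i)) = blk3 (\<Sum>i\<in>S. x i) (\<Sum>i\<in>S. y i) (\<Sum>i\<in>S. g i)"
  by (induction S rule: finite_induct) (simp_all add: blk3_zero blk3_add)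
lemma blk3_surj: "z = blk3 (\<chi> a. z $ Inl a) (\<chi> b. z $ Inr (Inl b)) (\<chi> c. z $ Inr (Inr c))"
  by (simp add: vec_eq_iff blk3_def split: sum.split)

lemma blk3_norm2: "(norm (blk3 x y g))^2 = (norm x)^2 + (norm y)^2 + (norm g)^2"
  by (simp add: power2_norm_eq_inner blk3_inner)

lemma blkmat3_mult:
  "blkmat3 M11 M12 M13 M21 M22 M23 M31 M32 M33 *v blk3 x y g =
   blk3 (M11 *v x + M12 *v y + M13 *v g) (M21 *v x + M22 *v y + M23 *v g) (M31 *v x + M32 *v y + M33 *v g)"
  by (simp add: vec_eq_iff blkmat3_def blk3_def matrix_vector_mult_def sum_UNIV_Plus split: sum.split)

lemma Mmat_mult:
  "Mmat G H B \<beta> \<tau> \<theta> *v blk3 x y g =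
   blk3 (G *v x)
        ((H + (((\<tau> - \<tau> * \<theta> + \<theta>) * \<beta>) / (\<tau> + \<theta>)) *\<^sub>R (transpose B ** B)) *v y - (\<tau> / (\<tau> + \<theta>)) *\<^sub>R (transpose B *v g))
        (- ((\<tau> / (\<tau> + \<theta>)) *\<^sub>R (B *v y)) + (1 / ((\<tau> + \<theta>) * \<beta>)) *\<^sub>R g)"
  unfolding Mmat_def blkmat3_mult
  by (simp add: scaleR_mat_mult uminus_mat_mult)

lemma symM: "transpose M = M \<Longrightarrow> inner (M *v a) b = inner a (M *v (b::real^'k))" for M :: "real^'k^'k"
  by (metis adjA)

lemma qn_swap: "transpose M = M \<Longrightarrow> inner (M *v b) a = inner (M *v a) (b::real^'k)" for M :: "real^'k^'k"
  using symM[of M b a] by (simp add: inner_commute)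
lemma qn_add: "transpose M = M \<Longrightarrow> qnorm2 M (a + b) = qnorm2 M a + 2 * inner (M *v a) b + qnorm2 M (b::real^'k)"
  for M :: "real^'k^'k"
  unfolding qnorm2_def using qn_swap[of M b a] by (simp add: matrix_vector_right_distrib inner_add_left inner_add_right)
lemma qn_diff: "transpose M = M \<Longrightarrow> qnorm2 M (a - b) = qnorm2 M a - 2 * inner (M *v a) b + qnorm2 M (b::real^'k)"
  for M :: "real^'k^'k"
  unfolding qnorm2_def using qn_swap[of M b a] by (simp add: matrix_vector_mult_diff_distrib inner_diff_left inner_diff_right)
lemma qn_scale: "qnorm2 M (c *\<^sub>R a) = c^2 * qnorm2 M (a::real^'k)" for M :: "real^'k^'k"
  unfolding qnorm2_def by (simp add: matrix_vector_mult_scaleR power2_eq_square)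

lemma psd_CS:
  fixes M :: "real^'k^'k"
  assumes sym: "transpose M = M" and psd: "\<And>z. qnorm2 M z \<ge> 0"
  shows "(inner (M *v a) b)^2 \<le> qnorm2 M a * qnorm2 M b"
proof -
  define A where "A = qnorm2 M a"
  define C where "C = qnorm2 M b"
  define D where "D = inner (M *v a) b"
  have q: "A + 2 * t * D + t^2 * C \<ge> 0" for t
  proof -
    have "qnorm2 M (a + t *\<^sub>R b) = A + 2 * t * D + t^2 * C"
      unfolding A_def C_def D_def qn_add[OF sym] qn_scale
      by (simp add: matrix_vector_mult_scaleR algebra_simps)
    thus ?thesis using psd[of "a + t *\<^sub>R b"] by simp
  qed
  have A0: "A \<ge> 0" "C \<ge> 0" using psd A_def C_def by auto
  show ?thesis
  proof (cases "C > 0")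
    case True
    have "A + 2 * (-D/C) * D + (-D/C)^2 * C \<ge> 0" using q .
    moreover have "C * (A + 2 * (-D/C) * D + (-D/C)^2 * C) = A * C - D^2"
      using True by (simp add: power2_eq_square field_simps)
    ultimately have "A * C - D^2 \<ge> 0" using True by (metis less_eq_real_def mult_nonneg_nonneg)
    hence "D^2 \<le> A * C" by simp
    thus ?thesis unfolding A_def C_def D_def .
  next
    case False
    hence C0: "C = 0" using A0 by simp
    have "D = 0"
    proof (rule ccontr)
      assume "D \<noteq> 0"
      have "A + 2 * (-(A+1)/(2*D)) * D + (-(A+1)/(2*D))^2 * C \<ge> 0" using q .
      moreover have "2 * (-(A+1)/(2*D)) * D = -(A+1)" using \<open>D \<noteq> 0\<close> by simp
      ultimately have "A - (A + 1) \<ge> 0" using C0 by simp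
      thus False by simp
    qed
    thus ?thesis using A0 unfolding D_def A_def C_def by simp
  qed
qed

lemma psd_triangle:
  fixes M :: "real^'k^'k"
  assumes sym: "transpose M = M" and psd: "\<And>z. qnorm2 M z \<ge> 0"
  shows "sqrt (qnorm2 M (a + b)) \<le> sqrt (qnorm2 M a) + sqrt (qnorm2 M b)"
proof -
  have cs: "inner (M *v a) b \<le> sqrt (qnorm2 M a) * sqrt (qnorm2 M b)"
  proof -
    have "(inner (M *v a) b)^2 \<le> qnorm2 M a * qnorm2 M b" by (rule psd_CS[OF sym psd])
    also have "\<dots> = (sqrt (qnorm2 M a) * sqrt (qnorm2 M b))^2"
      using psd[of a] psd[of b] by (simp add: power_mult_distrib)
    finally show ?thesis by (rule power2_le_imp_le) (simp add: psd)
  qed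
  have e: "(sqrt (qnorm2 M a) + sqrt (qnorm2 M b))^2 = qnorm2 M a + 2 * (sqrt (qnorm2 M a) * sqrt (qnorm2 M b)) + qnorm2 M b"
    using psd by (simp add: power2_sum)
  have "qnorm2 M (a + b) \<le> (sqrt (qnorm2 M a) + sqrt (qnorm2 M b))^2"
    unfolding e qn_add[OF sym] using cs by linarith
  hence "sqrt (qnorm2 M (a + b)) \<le> sqrt ((sqrt (qnorm2 M a) + sqrt (qnorm2 M b))^2)"
    by (rule real_sqrt_le_mono)
  thus ?thesis using psd by simp
qed

lemma psd_diff_bound:
  fixes M :: "real^'k^'k"
  assumes sym: "transpose M = M" and psd: "\<And>z. qnorm2 M z \<ge> 0"
  shows "sqrt (qnorm2 M (a - b)) \<le> sqrt (qnorm2 M (a - c)) + sqrt (qnorm2 M (c - b))"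
  using psd_triangle[OF sym psd, of "a - c" "c - b"] by simp

lemma qn_cont: "continuous_on S (\<lambda>z. qnorm2 M (z::real^'k))" for M :: "real^'k^'k"
proof -
  have "continuous_on S (\<lambda>z. M *v z)"
    by (rule linear_continuous_on) (rule matrix_vector_mul_bounded_linear)
  thus ?thesis unfolding qnorm2_def by (intro continuous_intros)
qed

lemma spectral:
  fixes M :: "real^'k^'k"
  assumes sym: "transpose M = M" and psd: "\<And>z. qnorm2 M z \<ge> 0"
  shows "lambda_max M \<ge> 0" "(norm (M *v z))^2 \<le> lambda_max M * qnorm2 M z"
proof -
  obtain z0 where z0s: "z0 \<in> sphere (0::real^'k) 1" and z0m: "\<And>y. y \<in> sphere 0 1 \<Longrightarrow> qnorm2 M y \<le> qnorm2 M z0"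
  proof -
    have "\<exists>x\<in>sphere (0::real^'k) 1. \<forall>y\<in>sphere 0 1. qnorm2 M y \<le> qnorm2 M x"
      by (rule continuous_attains_sup) (simp_all add: qn_cont)
    thus ?thesis using that by blast
  qed
  define \<mu> where "\<mu> = qnorm2 M z0"
  have nz0: "norm z0 = 1" using z0s by simp
  have bound: "qnorm2 M z \<le> \<mu> * (norm z)^2" for z
  proof (cases "z = 0")
    case True thus ?thesis by (simp add: qnorm2_def)
  next
    case False
    define z' where "z' = (1 / norm z) *\<^sub>R z"
    have "z' \<in> sphere 0 1" using False z'_def by simp
    hence "qnorm2 M z' \<le> \<mu>" using z0m \<mu>_def by simp
    moreover have "z = norm z *\<^sub>R z'" using False z'_def by simp
    hence "qnorm2 M z = (norm z)^2 * qnorm2 M z'" by (metis qn_scale)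
    ultimately show ?thesis by (metis mult.commute mult_right_mono zero_le_power2)
  qed
  define Q where "Q = \<mu> *\<^sub>R mat 1 - M"
  have symQ: "transpose Q = Q" unfolding Q_def using sym
    by (simp add: transpose_def vec_eq_iff mat_def)
  have qQ: "qnorm2 Q z = \<mu> * (norm z)^2 - qnorm2 M z" for z
    unfolding Q_def qnorm2_def
    by (simp add: matrix_vector_mult_diff_rdistrib scaleR_mat_mult inner_diff_left power2_norm_eq_inner)
  have psdQ: "qnorm2 Q z \<ge> 0" for z using qQ bound[of z] by simp
  have qQ0: "qnorm2 Q z0 = 0" using qQ[of z0] nz0 \<mu>_def by simp
  have "(inner (Q *v z0) w)^2 \<le> 0" for w using psd_CS[OF symQ psdQ, of z0 w] qQ0 by simp
  hence "inner (Q *v z0) (Q *v z0) = 0" by (metis power2_less_eq_zero_iff)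
  hence "Q *v z0 = 0" by simp
  hence ev0: "M *v z0 = \<mu> *\<^sub>R z0" unfolding Q_def
    by (simp add: matrix_vector_mult_diff_rdistrib scaleR_mat_mult)
  define E where "E = {l. \<exists>v. v \<noteq> 0 \<and> M *v v = l *\<^sub>R v}"
  have muE: "\<mu> \<in> E" unfolding E_def using ev0 nz0 by (intro CollectI exI[of _ z0]) auto
  have leE: "l \<le> \<mu>" if lE: "l \<in> E" for l
  proof -
    obtain v where v: "v \<noteq> 0" "M *v v = l *\<^sub>R v" using lE unfolding E_def by auto
    have "qnorm2 M v = l * (norm v)^2" unfolding qnorm2_def v(2) by (simp add: power2_norm_eq_inner)
    hence "l * (norm v)^2 \<le> \<mu> * (norm v)^2" using bound[of v] by simp
    thus ?thesis using v(1) by simp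
  qed
  have finE: "finite E"
  proof -
    define ev where "ev l = (SOME v. v \<noteq> 0 \<and> M *v v = l *\<^sub>R v)" for l
    have evp: "ev l \<noteq> 0 \<and> M *v ev l = l *\<^sub>R ev l" if "l \<in> E" for l
      using that unfolding E_def ev_def by (metis (mono_tags, lifting) mem_Collect_eq someI_ex)
    have orth: "inner (ev l) (ev l') = 0" if "l \<in> E" "l' \<in> E" "l \<noteq> l'" for l l'
    proof -
      have "inner (M *v ev l) (ev l') = inner (ev l) (M *v ev l')" by (rule symM[OF sym])
      hence "l * inner (ev l) (ev l') = l' * inner (ev l) (ev l')" using evp[OF that(1)] evp[OF that(2)] by simp
      thus ?thesis using that(3) by simp
    qed
    have inj: "inj_on ev E"
    proof (rule inj_onI)
      fix l l' assume "l \<in> E" "l' \<in> E" "ev l = ev l'"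
      thus "l = l'" using orth[of l l'] evp[of l] by fastforce
    qed
    have "pairwise orthogonal (ev ` E)"
      unfolding pairwise_def orthogonal_def using orth by (metis imageE)
    moreover have "0 \<notin> ev ` E" using evp by auto
    ultimately have "independent (ev ` E)" by (rule pairwise_orthogonal_independent)
    hence "finite (ev ` E)" by (rule finiteI_independent)
    thus ?thesis using inj finite_imageD by blast
  qed
  have lm: "lambda_max M = \<mu>" unfolding lambda_max_def E_def[symmetric]
    by (rule Max_eqI[OF finE leE muE])
  show mu0: "lambda_max M \<ge> 0" using lm \<mu>_def psd by simp
  show "(norm (M *v z))^2 \<le> lambda_max M * qnorm2 M z"
  proof (cases "M *v z = 0")
    case True thus ?thesis using mu0 psd[of z] by simp
  next
    case False
    define w where "w = M *v z"
    have "(inner (M *v z) w)^2 \<le> qnorm2 M z * qnorm2 M w" by (rule psd_CS[OF sym psd])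
    also have "\<dots> \<le> qnorm2 M z * (\<mu> * (norm w)^2)" using bound[of w] psd[of z] by (simp add: mult_left_mono)
    finally have "((norm w)^2)^2 \<le> (qnorm2 M z * \<mu>) * (norm w)^2"
      unfolding w_def by (simp add: power2_norm_eq_inner mult.assoc)
    hence f1: "(norm w)^2 * (norm w)^2 \<le> (qnorm2 M z * \<mu>) * (norm w)^2" by (simp add: power2_eq_square)
    have f2: "(norm w)^2 > 0" using False w_def by simp
    have "(norm w)^2 \<le> qnorm2 M z * \<mu>" using mult_right_le_imp_le[OF f1 f2] .
    thus ?thesis using lm w_def by (simp add: mult.commute)
  qed
qed

lemma subdiff_iff: "s \<in> subdiff h x \<longleftrightarrow> (\<forall>z. h z \<ge> h x + ereal (inner s (z - x)))"
  by (simp add: subdiff_def eps_subdiff_def)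

lemma subdiff_finite:
  assumes "proper_fun h" "s \<in> subdiff h x"
  shows "\<exists>c. h x = ereal c"
proof -
  obtain z where z: "h z \<noteq> \<infinity>" using assms(1) unfolding proper_fun_def by auto
  have "h z \<ge> h x + ereal (inner s (z - x))" using assms(2) subdiff_iff by blast
  hence "h x \<noteq> \<infinity>" using z by auto
  moreover have "h x \<noteq> -\<infinity>" using assms(1) unfolding proper_fun_def by auto
  ultimately show ?thesis by (cases "h x") auto
qed

lemma subdiff_real:
  assumes "proper_fun h" "s \<in> subdiff h x" "h x = ereal c" "h z = ereal d"
  shows "d \<ge> c + inner s (z - x)"
proof -
  have "h z \<ge> h x + ereal (inner s (z - x))" using assms(2) subdiff_iff by blast
  thus ?thesis using assms(3,4) by simp
qed

lemma subdiff_mono: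
  assumes "proper_fun h" "s \<in> subdiff h x" "s' \<in> subdiff h x'"
  shows "inner (s - s') (x - x') \<ge> 0"
proof -
  obtain c where c: "h x = ereal c" using subdiff_finite assms(1,2) by blast
  obtain c' where c': "h x' = ereal c'" using subdiff_finite assms(1,3) by blast
  have "c' \<ge> c + inner s (x' - x)" using subdiff_real[OF assms(1,2) c c'] .
  moreover have "c \<ge> c' + inner s' (x - x')" using subdiff_real[OF assms(1,3) c' c] .
  ultimately show ?thesis by (simp add: inner_diff_left inner_diff_right algebra_simps)
qed

lemma avg_Suc:
  fixes xx :: "nat \<Rightarrow> 'a::real_vector"
  assumes "k \<ge> 1"
  shows "avg (Suc k) xx = (1 - 1 / real (Suc k)) *\<^sub>R avg k xx + (1 / real (Suc k)) *\<^sub>R xx (Suc k)"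
proof -
  have "(1 - 1 / real (Suc k)) * (1 / real k) = 1 / real (Suc k)" using assms by (simp add: field_simps)
  thus ?thesis unfolding avg_def using assms
    by (simp add: scaleR_add_right)
qed

lemma jensen:
  assumes cvx: "convex_fun h"
  shows "k \<ge> 1 \<Longrightarrow> (\<And>i. 1 \<le> i \<Longrightarrow> i \<le> k \<Longrightarrow> h (xx i) = ereal (c i))
         \<Longrightarrow> h (avg k xx) \<le> ereal ((1 / real k) * (\<Sum>i = 1..k. c i))"
proof (induction k)
  case 0 thus ?case by simp
next
  case (Suc k)
  show ?case
  proof (cases "k = 0")
    case True thus ?thesis using Suc.prems by (simp add: avg_def)
  next
    case False
    hence k1: "k \<ge> 1" by simp
    define t where "t = 1 / real (Suc k)"
    have sk: "real (Suc k) > 1" using k1 by simp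
    have t: "0 < t" "t < 1" using sk unfolding t_def by (auto simp: divide_less_eq)
    have IH: "h (avg k xx) \<le> ereal ((1 / real k) * (\<Sum>i = 1..k. c i))" using Suc k1 by auto
    have "h (avg (Suc k) xx) = h ((1 - t) *\<^sub>R avg k xx + t *\<^sub>R xx (Suc k))"
      by (subst avg_Suc[OF k1]) (simp add: t_def)
    also have "\<dots> \<le> ereal (1 - t) * h (avg k xx) + ereal t * h (xx (Suc k))"
      using cvx t unfolding convex_fun_def by blast
    also have "\<dots> \<le> ereal (1 - t) * ereal ((1 / real k) * (\<Sum>i = 1..k. c i)) + ereal t * ereal (c (Suc k))"
      using IH t Suc.prems(2)[of "Suc k"] by (intro add_mono ereal_mult_left_mono) auto
    also have "\<dots> = ereal ((1 / real (Suc k)) * (\<Sum>i = 1..Suc k. c i))"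
    proof -
      have e: "(1 - t) * (1 / real k) = 1 / real (Suc k)" using k1 t_def by (simp add: field_simps)
      have e2: "(1 - t) * ((1 / real k) * (\<Sum>i = 1..k. c i)) = (1 / real (Suc k)) * (\<Sum>i = 1..k. c i)"
        using e by (metis mult.assoc)
      have e3: "(\<Sum>i = 1..Suc k. c i) = (\<Sum>i = 1..k. c i) + c (Suc k)" by simp
      have "(1 - t) * ((1 / real k) * (\<Sum>i = 1..k. c i)) + t * c (Suc k) = (1 / real (Suc k)) * (\<Sum>i = 1..Suc k. c i)"
        unfolding e2 e3 by (simp add: t_def distrib_left)
      thus ?thesis by simp
    qed
    finally show ?thesis .
  qed
qed

lemma transport:
  fixes h :: "'a::real_inner \<Rightarrow> ereal"
  assumes hp: "proper_fun h" and cvx: "convex_fun h" and k: "k \<ge> 1"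
    and sub: "\<And>i. 1 \<le> i \<Longrightarrow> i \<le> k \<Longrightarrow> s i \<in> subdiff h (xx i)"
  shows "(1 / real k) * (\<Sum>i = 1..k. inner (s i) (xx i - avg k xx)) \<ge> 0
       \<and> avg k s \<in> eps_subdiff h ((1 / real k) * (\<Sum>i = 1..k. inner (s i) (xx i - avg k xx))) (avg k xx)"
proof -
  define xa where "xa = avg k xx"
  define sa where "sa = avg k s"
  define \<epsilon> where "\<epsilon> = (1 / real k) * (\<Sum>i = 1..k. inner (s i) (xx i - xa))"
  define c where "c i = real_of_ereal (h (xx i))" for i
  have hc: "h (xx i) = ereal (c i)" if "1 \<le> i" "i \<le> k" for i
    using subdiff_finite[OF hp sub[OF that]] c_def by auto
  define C where "C = (1 / real k) * (\<Sum>i = 1..k. c i)"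
  have J: "h xa \<le> ereal C" unfolding xa_def C_def by (rule jensen[OF cvx k hc])
  have key: "d \<ge> C + inner sa (z - xa) - \<epsilon>" if hz: "h z = ereal d" for z d
  proof -
    have each: "d \<ge> c i + inner (s i) (z - xx i)" if "i \<in> {1..k}" for i
      using subdiff_real[OF hp sub hc hz] that by auto
    have "(\<Sum>i = 1..k. c i + inner (s i) (z - xx i)) \<le> (\<Sum>i = 1..k. d)"
      using each by (intro sum_mono) auto
    hence S: "(\<Sum>i = 1..k. c i) + (\<Sum>i = 1..k. inner (s i) (z - xx i)) \<le> real k * d"
      by (simp add: sum.distrib)
    have "(\<Sum>i = 1..k. inner (s i) (z - xx i)) = (\<Sum>i = 1..k. inner (s i) (z - xa)) - (\<Sum>i = 1..k. inner (s i) (xx i - xa))"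
      by (simp add: sum_subtractf[symmetric] inner_diff_right algebra_simps)
    also have "(\<Sum>i = 1..k. inner (s i) (z - xa)) = real k * inner sa (z - xa)"
      unfolding sa_def avg_def using k by (simp add: inner_sum_left)
    also have "(\<Sum>i = 1..k. inner (s i) (xx i - xa)) = real k * \<epsilon>"
      unfolding \<epsilon>_def using k by simp
    finally have "real k * C + real k * inner sa (z - xa) - real k * \<epsilon> \<le> real k * d"
      using S k unfolding C_def by (simp add: algebra_simps)
    hence "real k * (C + inner sa (z - xa) - \<epsilon>) \<le> real k * d" by (simp add: algebra_simps)
    thus ?thesis using k by simp
  qed
  have hxa_fin: "h xa \<noteq> -\<infinity>" using hp unfolding proper_fun_def by auto
  obtain e where e: "h xa = ereal e" using J hxa_fin by (cases "h xa") auto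
  have eC: "e \<le> C" using J e by simp
  have eps0: "\<epsilon> \<ge> 0" using key[OF e] eC by simp
  have "sa \<in> eps_subdiff h \<epsilon> xa"
    unfolding eps_subdiff_def
  proof (intro CollectI allI)
    fix z
    show "h z \<ge> h xa + ereal (inner sa (z - xa) - \<epsilon>)"
    proof (cases "h z")
      case (real d)
      thus ?thesis using key[OF real] e eC by simp
    next
      case PInf thus ?thesis by simp
    next
      case MInf thus ?thesis using hp unfolding proper_fun_def by auto
    qed
  qed
  thus ?thesis using eps0 unfolding \<epsilon>_def xa_def sa_def by simp
qed

lemma small_t:
  fixes X C :: real
  assumes "\<And>t. 0 < t \<Longrightarrow> t < 1 \<Longrightarrow> X + t * C \<ge> 0"
  shows "X \<ge> 0"
proof (rule ccontr)
  assume X: "\<not> X \<ge> 0"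
  show False
  proof (cases "C \<le> 0")
    case True
    have "X + (1/2) * C \<ge> 0" using assms[of "1/2"] by simp
    moreover have "(1/2) * C \<le> 0" using True by simp
    ultimately show False using X by simp
  next
    case False
    define t where "t = min (1/2) (-X / (2*C))"
    have "X/(2*C) < 0" using X False by (simp add: divide_neg_pos)
    hence t: "0 < t" "t < 1" using t_def by auto
    have "t * C \<le> (-X/(2*C)) * C" using False t_def by (intro mult_right_mono) auto
    also have "\<dots> = -X/2" using False by simp
    finally have "X + t * C < 0" using X by simp
    thus False using assms[OF t] by simp
  qed
qed

lemma opt_subgrad:
  fixes g :: "'a::real_inner \<Rightarrow> ereal"
  assumes hp: "proper_fun g" and cvx: "convex_fun g"
    and opt: "\<And>y'. g y0 + ereal (q y0) \<le> g y' + ereal (q y')"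
    and quad: "\<And>y' t. q (y0 + t *\<^sub>R (y' - y0)) = q y0 + t * inner dq (y' - y0) + t^2 * cq y'"
  shows "- dq \<in> subdiff g y0"
proof -
  obtain y1 where y1: "g y1 \<noteq> \<infinity>" using hp unfolding proper_fun_def by auto
  have "g y0 + ereal (q y0) \<noteq> \<infinity>" using opt[of y1] y1 by (cases "g y1") auto
  hence "g y0 \<noteq> \<infinity>" by auto
  moreover have "g y0 \<noteq> -\<infinity>" using hp unfolding proper_fun_def by auto
  ultimately obtain a where a: "g y0 = ereal a" by (cases "g y0") auto
  show ?thesis unfolding subdiff_iff
  proof
    fix z
    show "g z \<ge> g y0 + ereal (inner (- dq) (z - y0))"
    proof (cases "g z")
      case PInf thus ?thesis by simp
    next
      case MInf thus ?thesis using hp unfolding proper_fun_def by auto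
    next
      case (real b)
      have "b - a + inner dq (z - y0) + t * cq z \<ge> 0" if t: "0 < t" "t < 1" for t
      proof -
        have yt: "(1 - t) *\<^sub>R y0 + t *\<^sub>R z = y0 + t *\<^sub>R (z - y0)" by (simp add: algebra_simps)
        have "g (y0 + t *\<^sub>R (z - y0)) \<le> ereal (1 - t) * g y0 + ereal t * g z"
          using cvx t unfolding convex_fun_def yt[symmetric] by blast
        hence gt: "g (y0 + t *\<^sub>R (z - y0)) \<le> ereal ((1 - t) * a + t * b)" using a real by simp
        have "ereal (a + q y0) \<le> g (y0 + t *\<^sub>R (z - y0)) + ereal (q (y0 + t *\<^sub>R (z - y0)))"
          using opt[of "y0 + t *\<^sub>R (z - y0)"] a by simp
        also have "\<dots> \<le> ereal ((1 - t) * a + t * b) + ereal (q (y0 + t *\<^sub>R (z - y0)))"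
          using gt by (intro add_right_mono)
        finally have "a + q y0 \<le> (1 - t) * a + t * b + (q y0 + t * inner dq (z - y0) + t^2 * cq z)"
          unfolding quad by simp
        hence "0 \<le> t * (b - a + inner dq (z - y0) + t * cq z)"
          by (simp add: algebra_simps power2_eq_square)
        thus ?thesis using t by (simp add: zero_le_mult_iff)
      qed
      hence "b - a + inner dq (z - y0) \<ge> 0" using small_t[of "b - a + inner dq (z - y0)" "cq z"] by simp
      thus ?thesis using a real by simp
    qed
  qed
qed

lemma theta_aux:
  fixes t s v u :: real
  assumes t: "t>0" and s: "s\<ge>0" and v: "v>0" and reg: "(t+s) * v * (t+u) - u^2 * t > 0"
  shows "(3*t+s)*(2*t+v+u) > 4*t^2"
proof (cases "v+u \<ge> 0")
  case True
  have "(3*t+s)*(2*t+v+u) \<ge> (3*t+s)*(2*t)"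
    using True t s by (intro mult_left_mono) auto
  moreover have "(3*t+s)*(2*t) \<ge> 6*t^2" using t s by (simp add: power2_eq_square algebra_simps)
  ultimately show ?thesis using t by (smt (verit) zero_less_power)
next
  case False
  define m where "m = -u"
  have mv: "m > v" using False m_def by simp
  have m0: "m > 0" using mv v by simp
  have "m^2 * t > 0" using m0 t by simp
  hence "(t+s) * v * (t-m) > 0" using reg m_def by simp
  moreover have "(t+s) * v > 0" using t s v by simp
  ultimately have tm: "t - m > 0" by (metis zero_less_mult_pos)
  have q1: "2*t^2-5*t*m+6*m^2 \<ge> 0"
  proof -
    have "2*t^2-5*t*m+6*m^2 = 2*(t-5/4*m)^2 + 23/8*m^2" by (simp add: power2_eq_square algebra_simps)
    moreover have "0 \<le> 2*(t-5/4*m)^2 + 23/8*m^2" by (intro add_nonneg_nonneg) auto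
    ultimately show ?thesis by simp
  qed
  have q2: "2*t^2-5*t*m+4*m^2 \<ge> 0"
  proof -
    have "2*t^2-5*t*m+4*m^2 = 2*(t-5/4*m)^2 + 7/8*m^2" by (simp add: power2_eq_square algebra_simps)
    moreover have "0 \<le> 2*(t-5/4*m)^2 + 7/8*m^2" by (intro add_nonneg_nonneg) auto
    ultimately show ?thesis by simp
  qed
  have e1: "t^2*(2*t^2-5*t*m+6*m^2) \<ge> 0" using q1 by simp
  have e2: "s*t*(2*t^2-5*t*m+4*m^2) \<ge> 0" using q2 s t by simp
  have e3: "s*(t+s)*(t-m)*(2*t-m) \<ge> 0" using s t tm by simp
  have e4: "(3*t+s)*((t+s) * v * (t-m) - m^2*t) > 0" using reg m_def t s by simp
  have iden: "(t+s)*(t-m)*((3*t+s)*(2*t+v-m) - 4*t^2)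
     = t^2*(2*t^2-5*t*m+6*m^2) + s*t*(2*t^2-5*t*m+4*m^2) + s*(t+s)*(t-m)*(2*t-m)
       + (3*t+s)*((t+s) * v * (t-m) - m^2*t)"
    by (simp add: power2_eq_square algebra_simps)
  have "(t+s)*(t-m)*((3*t+s)*(2*t+v-m) - 4*t^2) > 0" using iden e1 e2 e3 e4 by linarith
  moreover have "(t+s)*(t-m) > 0" using t s tm by simp
  ultimately have "(3*t+s)*(2*t+v-m) - 4*t^2 > 0" by (metis zero_less_mult_pos)
  thus ?thesis using m_def by simp
qed

lemma vartheta_facts:
  assumes "0 \<le> st" "st < 1" "(\<tau>, \<theta>) \<in> region_R st"
  shows "vartheta st \<tau> \<theta> > 0" "3 - 3 * \<tau> - 2 * st > 0" "4 - \<tau> - \<theta> - 2 * st > 0"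
    "vartheta st \<tau> \<theta> = sqrt ((3 - 3 * \<tau> - 2 * st) * (4 - \<tau> - \<theta> - 2 * st)) - 2 * (1 - \<tau> - st)"
proof -
  define t where "t = 1 - \<tau> - st"
  define v where "v = 1 + \<tau>"
  define u where "u = 1 - \<theta>"
  have R: "-1 < \<tau>" "\<tau> < 1 - st" "\<tau> + \<theta> > 0"
     "(1 - \<tau>^2) * (2 - \<tau> - \<theta> - st) - (1 - \<theta>)^2 * (1 - \<tau> - st) > 0"
    using assms(3) unfolding region_R_def by auto
  have t0: "t > 0" using R t_def by simp
  have v0: "v > 0" using R v_def by simp
  have reg: "(t+st) * v * (t+u) - u^2 * t > 0"
  proof -
    have "(t+st) * v * (t+u) - u^2 * t = (1 - \<tau>^2) * (2 - \<tau> - \<theta> - st) - (1 - \<theta>)^2 * (1 - \<tau> - st)"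
      unfolding t_def v_def u_def by (simp add: power2_eq_square algebra_simps)
    thus ?thesis using R by simp
  qed
  have main: "(3*t+st)*(2*t+v+u) > 4*t^2" using theta_aux[OF t0 assms(1) v0 reg] .
  have eq: "(3 - 3 * \<tau> - 2 * st) * (4 - \<tau> - \<theta> - 2 * st) = (3*t+st)*(2*t+v+u)"
    unfolding t_def v_def u_def by (simp add: algebra_simps)
  have P0: "3 - 3 * \<tau> - 2 * st > 0" using t0 assms(1) unfolding t_def by simp
  show "3 - 3 * \<tau> - 2 * st > 0" by (rule P0)
  have "(3 - 3 * \<tau> - 2 * st) * (4 - \<tau> - \<theta> - 2 * st) > 0" using main eq t0 by (smt (verit) zero_less_power)
  thus "4 - \<tau> - \<theta> - 2 * st > 0" using P0 by (metis zero_less_mult_pos)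
  have "(2*t)^2 < (3 - 3 * \<tau> - 2 * st) * (4 - \<tau> - \<theta> - 2 * st)"
    using main eq by (simp add: power2_eq_square)
  hence "sqrt ((3 - 3 * \<tau> - 2 * st) * (4 - \<tau> - \<theta> - 2 * st)) > 2*t" by (rule real_less_rsqrt)
  thus "vartheta st \<tau> \<theta> > 0" unfolding vartheta_def t_def by simp
  show "vartheta st \<tau> \<theta> = sqrt ((3 - 3 * \<tau> - 2 * st) * (4 - \<tau> - \<theta> - 2 * st)) - 2 * (1 - \<tau> - st)"
    by (simp add: vartheta_def)
qed

lemma pd_inv:
  assumes "sym_pd G"
  shows "G *v (matrix_inv G *v u) = (u::real^'n)"
proof -
  have "\<forall>x. G *v x = 0 \<longrightarrow> x = 0"
  proof (intro allI impI)
    fix x assume "G *v x = 0"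
    hence "inner (G *v x) x = 0" by simp
    thus "x = 0" using assms unfolding sym_pd_def by (metis less_irrefl)
  qed
  hence "\<exists>B. B ** G = mat 1" using matrix_left_invertible_ker by blast
  hence "invertible G" using invertible_left_inverse by blast
  hence "\<exists>A'. G ** A' = mat 1 \<and> A' ** G = mat 1" unfolding invertible_def .
  hence "G ** matrix_inv G = mat 1" unfolding matrix_inv_def by (rule someI_ex[where P = "\<lambda>A'. G ** A' = mat 1 \<and> A' ** G = mat 1", THEN conjunct1])
  thus ?thesis by (metis matrix_vector_mul_assoc matrix_vector_mul_lid)
qed

lemma ereal_shift: "(e - ereal a) + ereal b = e + ereal (b - a)"
  by (cases e) auto

lemma norm_sq_lin:
  fixes u w :: "'a::real_inner"
  shows "(norm (a *\<^sub>R u + c *\<^sub>R w))^2 = a^2 * (norm u)^2 + 2*a*c*inner u w + c^2*(norm w)^2"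
  unfolding power2_norm_eq_inner
  by (simp add: inner_add_left inner_add_right inner_commute[of w u] power2_eq_square algebra_simps)

lemma norm_sq_diff:
  fixes u w :: "'a::real_inner"
  shows "(norm (u - c *\<^sub>R w))^2 = (norm u)^2 - 2*c*inner u w + c^2*(norm w)^2"
  using norm_sq_lin[of 1 u "-c" w] by simp

locale admm =
  fixes f :: "real^'n \<Rightarrow> ereal" and g :: "real^'p \<Rightarrow> ereal"
    and A :: "real^'n^'m" and B :: "real^'p^'m" and b :: "real^'m"
    and G :: "real^'n^'n" and H :: "real^'p^'p"
    and \<beta> st sh \<tau> \<theta> \<sigma> :: real
    and x :: "nat \<Rightarrow> real^'n" and y :: "nat \<Rightarrow> real^'p" and \<gamma> :: "nat \<Rightarrow> real^'m"
    and xt :: "nat \<Rightarrow> real^'n" and u :: "nat \<Rightarrow> real^'n"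
    and \<gamma>t :: "nat \<Rightarrow> real^'m" and \<gamma>h :: "nat \<Rightarrow> real^'m"
    and v :: "nat \<Rightarrow> real^'p" and w :: "nat \<Rightarrow> real^'m"
  assumes f_pcc: "proper_closed_convex f" and g_pcc: "proper_closed_convex g"
    and beta_pos: "\<beta> > 0"
    and st_range: "0 \<le> st" "st < 1" and sh_range: "0 \<le> sh" "sh < 1"
    and G_pd: "sym_pd G" and H_psd: "sym_psd H"
    and tau_theta: "(\<tau>, \<theta>) \<in> region_R st"
    and gt_def: "\<And>i. i \<ge> 1 \<Longrightarrow> \<gamma>t i = \<gamma> (i - 1) - \<beta> *\<^sub>R (A *v xt i + B *v y (i - 1) - b)"
    and u_incl: "\<And>i. i \<ge> 1 \<Longrightarrow> u i \<in> (\<lambda>s. s - transpose A *v \<gamma>t i) ` subdiff f (xt i)"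
    and inexact: "\<And>i. i \<ge> 1 \<Longrightarrow>
        qnorm2 G (xt i - x (i - 1) + matrix_inv G *v u i)
          \<le> st / \<beta> * (norm (\<gamma>t i - \<gamma> (i - 1)))^2 + sh * qnorm2 G (xt i - x (i - 1))"
    and gh_def: "\<And>i. i \<ge> 1 \<Longrightarrow> \<gamma>h i = \<gamma> (i - 1) - (\<tau> * \<beta>) *\<^sub>R (A *v xt i + B *v y (i - 1) - b)"
    and y_opt: "\<And>i y'. i \<ge> 1 \<Longrightarrow>
        g (y i) - ereal (inner (\<gamma>h i) (B *v y i))
          + ereal (\<beta> / 2 * (norm (A *v xt i + B *v y i - b))^2 + 1 / 2 * qnorm2 H (y i - y (i - 1)))
        \<le> g y' - ereal (inner (\<gamma>h i) (B *v y'))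
          + ereal (\<beta> / 2 * (norm (A *v xt i + B *v y' - b))^2 + 1 / 2 * qnorm2 H (y' - y (i - 1)))"
    and x_upd: "\<And>i. i \<ge> 1 \<Longrightarrow> x i = x (i - 1) - matrix_inv G *v u i"
    and g_upd: "\<And>i. i \<ge> 1 \<Longrightarrow> \<gamma> i = \<gamma>h i - (\<theta> * \<beta>) *\<^sub>R (A *v xt i + B *v y i - b)"
    and v_def: "\<And>i. v i = (H + (((\<tau> - \<tau> * \<theta> + \<theta>) * \<beta>) / (\<tau> + \<theta>)) *\<^sub>R (transpose B ** B)) *v (y (i - 1) - y i)
                       - (\<tau> / (\<tau> + \<theta>)) *\<^sub>R (transpose B *v (\<gamma> (i - 1) - \<gamma> i))"
    and w_def: "\<And>i. w i = - ((\<tau> / (\<tau> + \<theta>)) *\<^sub>R (B *v (y (i - 1) - y i)))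
                       + (1 / ((\<tau> + \<theta>) * \<beta>)) *\<^sub>R (\<gamma> (i - 1) - \<gamma> i)"
    and sigma_range: "sh \<le> \<sigma>" "\<sigma> < 1"
    and phi_conds: "phi st \<tau> \<theta> \<sigma> \<ge> 0" "phi_hat st \<tau> \<theta> \<sigma> \<ge> 0"
                   "phi_tilde st \<tau> \<theta> \<sigma> > 0" "phi_bar st \<tau> \<theta> \<sigma> \<ge> 0"
begin

abbreviation "MM \<equiv> Mmat G H B \<beta> \<tau> \<theta>"
definition "Z i = blk3 (x i) (y i) (\<gamma> i)"
definition "Zt i = blk3 (xt i) (y i) (\<gamma>t i)"
definition "R i = A *v xt i + B *v y i - b"
definition "p i = B *v (y i - y (i - 1))"

lemma par: "\<tau> + \<theta> > 0" "-1 < \<tau>" "\<tau> < 1 - st" "1 - \<tau> > 0" "1 + \<tau> > 0"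
  using tau_theta st_range unfolding region_R_def by auto

lemma Gsym: "transpose G = G" using G_pd unfolding sym_pd_def by simp
lemma Hsym: "transpose H = H" using H_psd unfolding sym_psd_def by simp
lemma Gpsd: "qnorm2 G z \<ge> 0" using G_pd unfolding sym_pd_def qnorm2_def
  by (metis less_eq_real_def inner_zero_left matrix_vector_mult_0_right)
lemma Hpsd: "qnorm2 H z \<ge> 0" using H_psd unfolding sym_psd_def qnorm2_def by simp

lemma BTB_sym: "transpose (transpose B ** B) = transpose B ** B"
  by (simp add: matrix_transpose_mul)

lemma Msym: "transpose MM = MM"
  unfolding Mmat_def blkmat3_def using Gsym Hsym BTB_sym
  by (auto simp: vec_eq_iff transpose_def mat_def split: sum.split)

lemma Mquad: "qnorm2 MM (blk3 xx yy gg) = qnorm2 G xx + qnorm2 H yy + \<beta> * (1 - \<tau>) * (norm (B *v yy))^2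
     + (norm (gg - (\<tau> * \<beta>) *\<^sub>R (B *v yy)))^2 / ((\<tau> + \<theta>) * \<beta>)"
proof -
  have tb: "\<tau> + \<theta> \<noteq> 0" using par by simp
  have bb: "\<beta> \<noteq> 0" using beta_pos by simp
  have e1: "inner ((transpose B ** B) *v yy) yy = (norm (B *v yy))^2"
    using adjA[of "transpose B" "B *v yy" yy] by (simp add: matrix_vector_mul_assoc[symmetric] power2_norm_eq_inner)
  have e2: "inner (transpose B *v gg) yy = inner gg (B *v yy)"
    using adjA[of "transpose B" gg yy] by simp
  have lhs: "qnorm2 MM (blk3 xx yy gg) = qnorm2 G xx + qnorm2 H yy
      + ((\<tau> - \<tau> * \<theta> + \<theta>) * \<beta> / (\<tau> + \<theta>)) * (norm (B *v yy))^2
      - 2 * (\<tau> / (\<tau> + \<theta>)) * inner gg (B *v yy) + (1 / ((\<tau> + \<theta>) * \<beta>)) * (norm gg)^2"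
    unfolding qnorm2_def Mmat_mult blk3_inner
    by (simp add: matrix_vector_mult_add_rdistrib scaleR_mat_mult inner_add_left inner_diff_left e1 e2
        power2_norm_eq_inner inner_commute[of "B *v yy" gg] algebra_simps)
  have rhs: "(norm (gg - (\<tau> * \<beta>) *\<^sub>R (B *v yy)))^2 = (norm gg)^2 - 2 * (\<tau> * \<beta>) * inner gg (B *v yy)
      + (\<tau> * \<beta>)^2 * (norm (B *v yy))^2"
    by (rule norm_sq_diff)
  define N where "N = (norm (B *v yy))^2"
  define I where "I = inner gg (B *v yy)"
  define W where "W = (norm gg)^2"
  have c1: "(W - 2 * (\<tau> * \<beta>) * I + (\<tau> * \<beta>)^2 * N) / ((\<tau> + \<theta>) * \<beta>)
      = (1 / ((\<tau> + \<theta>) * \<beta>)) * W - 2 * (\<tau> / (\<tau> + \<theta>)) * I + (\<tau>^2 * \<beta> / (\<tau> + \<theta>)) * N"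
    using tb bb by (simp add: diff_divide_distrib add_divide_distrib power2_eq_square)
  have c2: "(\<tau> - \<tau> * \<theta> + \<theta>) * \<beta> / (\<tau> + \<theta>) = \<beta> * (1 - \<tau>) + \<tau>^2 * \<beta> / (\<tau> + \<theta>)"
    using tb by (simp add: field_simps power2_eq_square)
  show ?thesis unfolding lhs rhs N_def[symmetric] I_def[symmetric] W_def[symmetric] c1 c2
    by (simp add: algebra_simps)
qed

end

context admm begin

lemma Mpsd: "qnorm2 MM z \<ge> 0"
proof -
  obtain xx yy gg where z: "z = blk3 xx yy gg" using blk3_surj by blast
  have "(norm (gg - (\<tau> * \<beta>) *\<^sub>R (B *v yy)))^2 / ((\<tau> + \<theta>) * \<beta>) \<ge> 0"
    using par beta_pos by simp
  moreover have "\<beta> * (1 - \<tau>) * (norm (B *v yy))^2 \<ge> 0" using par beta_pos by simp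
  ultimately show ?thesis unfolding z Mquad using Gpsd[of xx] Hpsd[of yy] by linarith
qed

lemma Rp: "i \<ge> 1 \<Longrightarrow> A *v xt i + B *v y (i - 1) - b = R i - p i"
  unfolding R_def p_def by (simp add: matrix_vector_mult_diff_distrib algebra_simps)

lemma gt_R: "i \<ge> 1 \<Longrightarrow> \<gamma>t i = \<gamma> (i - 1) - \<beta> *\<^sub>R (R i - p i)"
  using gt_def Rp by simp
lemma gh_R: "i \<ge> 1 \<Longrightarrow> \<gamma>h i = \<gamma> (i - 1) - (\<tau> * \<beta>) *\<^sub>R (R i - p i)"
  using gh_def Rp by simp
lemma gam_R: "i \<ge> 1 \<Longrightarrow> \<gamma> i = \<gamma> (i - 1) - (\<tau> * \<beta>) *\<^sub>R (R i - p i) - (\<theta> * \<beta>) *\<^sub>R R i"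
  using g_upd gh_R unfolding R_def by simp

lemma gam_diff: "i \<ge> 1 \<Longrightarrow> \<gamma> (i - 1) - \<gamma> i = ((\<tau> + \<theta>) * \<beta>) *\<^sub>R R i - (\<tau> * \<beta>) *\<^sub>R p i"
  using gam_R by (simp add: algebra_simps)

lemma w_R: "i \<ge> 1 \<Longrightarrow> w i = R i"
proof -
  assume i: "i \<ge> 1"
  have tb: "\<tau> + \<theta> \<noteq> 0" using par by simp
  have bb: "\<beta> \<noteq> 0" using beta_pos by simp
  have By: "B *v (y (i - 1) - y i) = - p i" unfolding p_def by (simp add: matrix_vector_mult_diff_distrib)
  define a where "a = \<tau> / (\<tau> + \<theta>)"
  define dd where "dd = 1 / ((\<tau> + \<theta>) * \<beta>)"
  have wd: "w i = - (a *\<^sub>R (B *v (y (i - 1) - y i))) + dd *\<^sub>R (\<gamma> (i - 1) - \<gamma> i)"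
    unfolding a_def dd_def by (rule w_def)
  have "w i = (a - dd * (\<tau> * \<beta>)) *\<^sub>R p i + (dd * ((\<tau> + \<theta>) * \<beta>)) *\<^sub>R R i"
    unfolding wd By gam_diff[OF i] by (simp add: algebra_simps)
  also have "\<dots> = R i"
  proof -
    have c1: "a - dd * (\<tau> * \<beta>) = 0" unfolding a_def dd_def using tb bb by simp
    have c2: "dd * ((\<tau> + \<theta>) * \<beta>) = 1" unfolding dd_def using tb bb by simp
    show ?thesis unfolding c1 c2 by simp
  qed
  finally show ?thesis .
qed

lemma resid: "i \<ge> 1 \<Longrightarrow> MM *v (Z (i - 1) - Z i) = blk3 (u i) (v i) (w i)"
proof -
  assume i: "i \<ge> 1"
  have "G *v (x (i - 1) - x i) = u i" using x_upd[OF i] pd_inv[OF G_pd] by simp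
  thus ?thesis unfolding Z_def blk3_diff Mmat_mult v_def w_def by simp
qed

lemma xe: "i \<ge> 1 \<Longrightarrow> xt i - x (i - 1) + matrix_inv G *v u i = xt i - x i"
  using x_upd by simp

end

context admm begin

lemma f_prop: "proper_fun f" "convex_fun f" using f_pcc unfolding proper_closed_convex_def by auto
lemma g_prop: "proper_fun g" "convex_fun g" using g_pcc unfolding proper_closed_convex_def by auto

lemma mv_uminus: "M *v (- z) = - (M *v (z::real^'k))" for M :: "real^'k^'l"
  by (simp add: vec_eq_iff matrix_vector_mult_def sum_negf)

lemma sub_f: "i \<ge> 1 \<Longrightarrow> u i + transpose A *v \<gamma>t i \<in> subdiff f (xt i)"
proof -
  assume i: "i \<ge> 1"
  obtain s where "s \<in> subdiff f (xt i)" "u i = s - transpose A *v \<gamma>t i" using u_incl[OF i] by blast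
  thus ?thesis by simp
qed

definition "sg i = transpose B *v (\<gamma>h i - \<beta> *\<^sub>R R i) - H *v (y i - y (i - 1))"

lemma sub_g: "i \<ge> 1 \<Longrightarrow> sg i \<in> subdiff g (y i)"
proof -
  assume i: "i \<ge> 1"
  define q where "q y' = \<beta> / 2 * (norm (A *v xt i + B *v y' - b))^2 + 1 / 2 * qnorm2 H (y' - y (i - 1))
                         - inner (\<gamma>h i) (B *v y')" for y'
  define dq where "dq = \<beta> *\<^sub>R (transpose B *v R i) + H *v (y i - y (i - 1)) - transpose B *v \<gamma>h i"
  define cq where "cq y' = \<beta> / 2 * (norm (B *v (y' - y i)))^2 + 1 / 2 * qnorm2 H (y' - y i)" for y'
  have opt: "g (y i) + ereal (q (y i)) \<le> g y' + ereal (q y')" for y'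
    using y_opt[OF i, of y'] unfolding q_def ereal_shift by simp
  have quad: "q (y i + t *\<^sub>R (y' - y i)) = q (y i) + t * inner dq (y' - y i) + t^2 * cq y'" for y' t
  proof -
    define D where "D = y' - y i"
    have e1: "A *v xt i + B *v (y i + t *\<^sub>R D) - b = 1 *\<^sub>R R i + t *\<^sub>R (B *v D)"
      unfolding R_def by (simp add: matrix_vector_right_distrib matrix_vector_mult_scaleR algebra_simps)
    have e2: "y i + t *\<^sub>R D - y (i - 1) = (y i - y (i - 1)) + t *\<^sub>R D" by simp
    have e3: "qnorm2 H ((y i - y (i - 1)) + t *\<^sub>R D) = qnorm2 H (y i - y (i - 1)) + 2 * t * inner (H *v (y i - y (i - 1))) D + t^2 * qnorm2 H D"
      unfolding qn_add[OF Hsym] qn_scale by (simp add: matrix_vector_mult_scaleR)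
    have e4: "inner (\<gamma>h i) (B *v (y i + t *\<^sub>R D)) = inner (\<gamma>h i) (B *v y i) + t * inner (\<gamma>h i) (B *v D)"
      by (simp add: matrix_vector_right_distrib matrix_vector_mult_scaleR inner_add_right)
    have e5: "inner dq D = \<beta> * inner (R i) (B *v D) + inner (H *v (y i - y (i - 1))) D - inner (\<gamma>h i) (B *v D)"
      unfolding dq_def using adjA[of B D "R i"] adjA[of B D "\<gamma>h i"]
      by (simp add: inner_add_left inner_diff_left inner_add_right inner_diff_right inner_commute)
    have "q (y i + t *\<^sub>R D) = \<beta> / 2 * ((norm (R i))^2 + 2 * t * inner (R i) (B *v D) + t^2 * (norm (B *v D))^2)
        + 1 / 2 * (qnorm2 H (y i - y (i - 1)) + 2 * t * inner (H *v (y i - y (i - 1))) D + t^2 * qnorm2 H D)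
        - (inner (\<gamma>h i) (B *v y i) + t * inner (\<gamma>h i) (B *v D))"
      unfolding q_def e1 e2 e3 e4 norm_sq_lin by simp
    also have "\<dots> = q (y i) + t * inner dq D + t^2 * cq y'"
      unfolding e5 by (simp add: q_def cq_def D_def[symmetric] R_def algebra_simps)
    finally show ?thesis unfolding D_def .
  qed
  have "- dq \<in> subdiff g (y i)" by (rule opt_subgrad[OF g_prop opt quad])
  moreover have "- dq = sg i" unfolding dq_def sg_def
    by (simp add: matrix_vector_mult_diff_distrib matrix_vector_mult_scaleR algebra_simps)
  ultimately show ?thesis by simp
qed

lemma v_sg: "i \<ge> 1 \<Longrightarrow> v i + transpose B *v \<gamma>t i = sg i"
proof -
  assume i: "i \<ge> 1"
  define a where "a = \<tau> / (\<tau> + \<theta>)"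
  define cc where "cc = ((\<tau> - \<tau> * \<theta> + \<theta>) * \<beta>) / (\<tau> + \<theta>)"
  have tb: "\<tau> + \<theta> \<noteq> 0" using par by simp
  have vd: "v i = (H + cc *\<^sub>R (transpose B ** B)) *v (y (i - 1) - y i) - a *\<^sub>R (transpose B *v (\<gamma> (i - 1) - \<gamma> i))"
    unfolding a_def cc_def by (rule v_def)
  have By: "B *v (y (i - 1) - y i) = - p i" unfolding p_def by (simp add: matrix_vector_mult_diff_distrib)
  have Hy: "H *v (y (i - 1) - y i) = - (H *v (y i - y (i - 1)))" by (simp add: matrix_vector_mult_diff_distrib)
  have "v i + transpose B *v \<gamma>t i = transpose B *v (\<gamma> (i - 1) + (- (a * ((\<tau> + \<theta>) * \<beta>)) - \<beta>) *\<^sub>R R i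
        + (a * (\<tau> * \<beta>) + \<beta> - cc) *\<^sub>R p i) - H *v (y i - y (i - 1))"
    unfolding vd gam_diff[OF i] gt_R[OF i] matrix_vector_mult_add_rdistrib scaleR_mat_mult
      matrix_vector_mul_assoc[symmetric] By Hy
    by (simp add: matrix_vector_right_distrib matrix_vector_mult_diff_distrib matrix_vector_mult_scaleR mv_uminus algebra_simps)
  also have "\<dots> = sg i"
  proof -
    have c1: "a * ((\<tau> + \<theta>) * \<beta>) = \<tau> * \<beta>" unfolding a_def using tb by simp
    have c2: "a * (\<tau> * \<beta>) + \<beta> - cc = \<tau> * \<beta>"
    proof -
      have "a * (\<tau> * \<beta>) + \<beta> - cc
         = (\<tau> * (\<tau> * \<beta>) + \<beta> * (\<tau> + \<theta>) - (\<tau> - \<tau> * \<theta> + \<theta>) * \<beta>) / (\<tau> + \<theta>)"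
        unfolding a_def cc_def using tb by (simp add: add_divide_distrib diff_divide_distrib)
      also have "(\<tau> * (\<tau> * \<beta>) + \<beta> * (\<tau> + \<theta>) - (\<tau> - \<tau> * \<theta> + \<theta>) * \<beta>) = (\<tau> * \<beta>) * (\<tau> + \<theta>)"
        by (simp add: algebra_simps)
      finally show ?thesis using tb by simp
    qed
    show ?thesis unfolding c1 c2 sg_def gh_R[OF i]
      by (simp add: algebra_simps)
  qed
  finally show ?thesis .
qed

end

lemma quadform:
  fixes A B C q X Y :: real
  assumes A: "A > 0" and AC: "A * C \<ge> B^2" and q: "q^2 \<le> X * Y" and hX: "X \<ge> 0" and hY: "Y \<ge> 0"
  shows "A * X - 2 * B * q + C * Y \<ge> 0"
proof -
  define s1 where "s1 = sqrt X"
  define s2 where "s2 = sqrt Y"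
  have X': "X = s1^2" "Y = s2^2" using hX hY s1_def s2_def by simp_all
  have s0: "s1 \<ge> 0" "s2 \<ge> 0" using s1_def s2_def hX hY by simp_all
  have "q^2 \<le> (s1 * s2)^2" using q X' by (simp add: power_mult_distrib)
  hence qa: "\<bar>q\<bar> \<le> s1 * s2" using s0 by (metis abs_le_square_iff abs_of_nonneg mult_nonneg_nonneg)
  have "B * q \<le> \<bar>B\<bar> * (s1 * s2)"
    by (metis abs_ge_self abs_mult abs_of_nonneg mult_left_mono abs_ge_zero qa order_trans)
  moreover have "A * (A * s1^2 - 2 * \<bar>B\<bar> * (s1 * s2) + C * s2^2) = (A * s1 - \<bar>B\<bar> * s2)^2 + (A * C - B^2) * s2^2"
    by (simp add: power2_eq_square algebra_simps)
  hence "A * (A * s1^2 - 2 * \<bar>B\<bar> * (s1 * s2) + C * s2^2) \<ge> 0" using AC by simp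
  hence "A * s1^2 - 2 * \<bar>B\<bar> * (s1 * s2) + C * s2^2 \<ge> 0" using A by (simp add: zero_le_mult_iff)
  moreover have "A * X - 2 * B * q + C * Y = A * s1^2 - 2 * (B * q) + C * s2^2" using X' by simp
  ultimately show ?thesis by linarith
qed

lemma err_step_real:
  fixes \<beta> \<tau> \<theta> \<sigma> st sh rr pp rp hy gx ex rr' q hy' hh :: real
  assumes b: "\<beta> > 0" and tt: "\<tau> + \<theta> > 0" and t1: "1 + \<tau> > 0"
    and ex: "ex \<le> st * \<beta> * (rr - 2 * rp + pp) + sh * gx" and shs: "sh \<le> \<sigma>" and gx: "gx \<ge> 0"
    and hy: "hy \<ge> 0"
    and mono: "(1-\<theta>)*\<beta>*q - (1+\<tau>)*\<beta>*rp + \<tau>*\<beta>*pp - hy + hh \<ge> 0"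
    and hh: "2 * hh \<le> hy + hy'"
    and q2: "q^2 \<le> rr' * pp" and rr': "rr' \<ge> 0" and pp: "pp \<ge> 0" and s0: "\<sigma> \<ge> 0"
    and ph: "phi st \<tau> \<theta> \<sigma> \<ge> 0" "phi_tilde st \<tau> \<theta> \<sigma> > 0" "phi_bar st \<tau> \<theta> \<sigma> \<ge> 0"
  shows "ex + \<beta>/(\<tau>+\<theta>) * ((\<tau>+\<theta>-1)^2*rr + 2*(\<tau>+\<theta>-1)*(1-\<tau>)*rp + (1-\<tau>)^2*pp)
   \<le> \<sigma>*(gx + hy + \<beta>*(1-\<tau>)*pp + \<beta>/(\<tau>+\<theta>)*(rr - 2*(1-\<tau>)*rp + (1-\<tau>)^2*pp))
     + \<beta>/(\<tau>+\<theta>)*(phi_tilde st \<tau> \<theta> \<sigma>*rr' + phi st \<tau> \<theta> \<sigma>/((1+\<tau>)*\<beta>)*hy')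
     - \<beta>/(\<tau>+\<theta>)*(phi_tilde st \<tau> \<theta> \<sigma>*rr + phi st \<tau> \<theta> \<sigma>/((1+\<tau>)*\<beta>)*hy)"
proof -
  define c1 where "c1 = 1 / (\<tau> + \<theta>)"
  define c2 where "c2 = 1 / (1 + \<tau>)"
  define cb where "cb = 1 / \<beta>"
  have c1: "c1 * (\<tau> + \<theta>) = 1" using tt c1_def by simp
  have c2: "c2 * (1 + \<tau>) = 1" using t1 c2_def by simp
  have cb: "cb * \<beta> = 1" using b cb_def by simp
  have c0: "c1 > 0" "c2 > 0" using tt t1 c1_def c2_def by simp_all
  have r1: "\<beta>/(\<tau>+\<theta>) = \<beta>*c1" using c1_def by simp
  have r2: "phi st \<tau> \<theta> \<sigma>/((1+\<tau>)*\<beta>) = phi st \<tau> \<theta> \<sigma>*c2*cb" using c2_def cb_def by simp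
  define Ph where "Ph = phi st \<tau> \<theta> \<sigma>"
  define Pt where "Pt = phi_tilde st \<tau> \<theta> \<sigma>"
  define Phat where "Phat = phi_hat st \<tau> \<theta> \<sigma>"
  have iden: "(\<sigma>*(gx + hy + \<beta>*(1-\<tau>)*pp + \<beta>*c1*(rr - 2*(1-\<tau>)*rp + (1-\<tau>)^2*pp))
     + \<beta>*c1*(Pt*rr' + Ph*c2*cb*hy') - \<beta>*c1*(Pt*rr + Ph*c2*cb*hy))
   - (ex + \<beta>*c1 * ((\<tau>+\<theta>-1)^2*rr + 2*(\<tau>+\<theta>-1)*(1-\<tau>)*rp + (1-\<tau>)^2*pp))
   = (\<sigma>-sh)*gx + (st*\<beta>*(rr-2*rp+pp) + sh*gx - ex)
     + c1*c2*(\<beta>*((1+\<tau>)*Pt * rr' - 2*(Ph*(1-\<theta>))*q + ((1+\<tau>)*Phat - 2*\<tau>*Ph)*pp)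
        + 2*Ph*((1-\<theta>)*\<beta>*q - (1+\<tau>)*\<beta>*rp + \<tau>*\<beta>*pp - hy + hh)
        + Ph*(hy+hy'-2*hh) + (1+\<tau>)*\<sigma>*(\<tau>+\<theta>)*hy)"
    using c1 c2 cb unfolding Ph_def Pt_def Phat_def phi_def phi_hat_def phi_tilde_def
    by algebra
  have Q: "(1+\<tau>)*Pt * rr' - 2*(Ph*(1-\<theta>))*q + ((1+\<tau>)*Phat - 2*\<tau>*Ph)*pp \<ge> 0"
  proof (rule quadform[OF _ _ q2 rr' pp])
    show "(1+\<tau>)*Pt > 0" using t1 ph(2) Pt_def by simp
    have "(1+\<tau>)*Pt * ((1+\<tau>)*Phat - 2*\<tau>*Ph) - (Ph*(1-\<theta>))^2 = phi_bar st \<tau> \<theta> \<sigma>"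
      unfolding phi_bar_def Pt_def Ph_def Phat_def by (simp add: power2_eq_square algebra_simps)
    thus "(1+\<tau>)*Pt * ((1+\<tau>)*Phat - 2*\<tau>*Ph) \<ge> (Ph*(1-\<theta>))^2" using ph(3) by simp
  qed
  have T1: "\<beta>*((1+\<tau>)*Pt * rr' - 2*(Ph*(1-\<theta>))*q + ((1+\<tau>)*Phat - 2*\<tau>*Ph)*pp) \<ge> 0" using Q b by simp
  have T2: "2*Ph*((1-\<theta>)*\<beta>*q - (1+\<tau>)*\<beta>*rp + \<tau>*\<beta>*pp - hy + hh) \<ge> 0" using mono ph(1) Ph_def by simp
  have T3: "Ph*(hy+hy'-2*hh) \<ge> 0" using hh ph(1) Ph_def by simp
  have T4: "(1+\<tau>)*\<sigma>*(\<tau>+\<theta>)*hy \<ge> 0" using t1 s0 tt hy by simp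
  have T5: "c1*c2*(\<beta>*((1+\<tau>)*Pt * rr' - 2*(Ph*(1-\<theta>))*q + ((1+\<tau>)*Phat - 2*\<tau>*Ph)*pp)
        + 2*Ph*((1-\<theta>)*\<beta>*q - (1+\<tau>)*\<beta>*rp + \<tau>*\<beta>*pp - hy + hh)
        + Ph*(hy+hy'-2*hh) + (1+\<tau>)*\<sigma>*(\<tau>+\<theta>)*hy) \<ge> 0"
    using T1 T2 T3 T4 c0 by simp
  have T6: "(\<sigma>-sh)*gx \<ge> 0" using shs gx by simp
  have T7: "st*\<beta>*(rr-2*rp+pp) + sh*gx - ex \<ge> 0" using ex by simp
  show ?thesis unfolding r1 r2 using iden T5 T6 T7 unfolding Ph_def Pt_def by linarith
qed

lemma err_first_real:
  fixes \<beta> \<tau> \<theta> \<sigma> st sh rr pp rp hy gx ex a0 tv :: real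
  assumes b: "\<beta> > 0" and tt: "\<tau> + \<theta> > 0" and t1: "1 + \<tau> > 0" and htv: "tv > 0"
    and ex: "ex \<le> st * \<beta> * (rr - 2 * rp + pp) + sh * gx" and shs: "sh \<le> \<sigma>" and gx: "gx \<ge> 0"
    and hy: "hy \<ge> 0" and pp: "pp \<ge> 0" and s0: "\<sigma> \<ge> 0"
    and K1: "\<beta> * tv * rp \<le> 2 * a0" and K2: "hy \<le> 2 * a0"
    and ph: "phi st \<tau> \<theta> \<sigma> \<ge> 0" "phi_hat st \<tau> \<theta> \<sigma> \<ge> 0"
  shows "ex + \<beta>/(\<tau>+\<theta>) * ((\<tau>+\<theta>-1)^2*rr + 2*(\<tau>+\<theta>-1)*(1-\<tau>)*rp + (1-\<tau>)^2*pp)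
   \<le> \<sigma>*(gx + hy + \<beta>*(1-\<tau>)*pp + \<beta>/(\<tau>+\<theta>)*(rr - 2*(1-\<tau>)*rp + (1-\<tau>)^2*pp))
     + 4 * (1 + \<tau> + tv) * phi st \<tau> \<theta> \<sigma> / ((\<tau> + \<theta>) * (1 + \<tau>) * tv) * a0
     - \<beta>/(\<tau>+\<theta>)*(phi_tilde st \<tau> \<theta> \<sigma>*rr + phi st \<tau> \<theta> \<sigma>/((1+\<tau>)*\<beta>)*hy)"
proof -
  define c1 where "c1 = 1 / (\<tau> + \<theta>)"
  define c2 where "c2 = 1 / (1 + \<tau>)"
  define cb where "cb = 1 / \<beta>"
  define cv where "cv = 1 / tv"
  have c1: "c1 * (\<tau> + \<theta>) = 1" using tt c1_def by simp
  have c2: "c2 * (1 + \<tau>) = 1" using t1 c2_def by simp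
  have cb: "cb * \<beta> = 1" using b cb_def by simp
  have cv: "cv * tv = 1" using htv cv_def by simp
  have c0: "c1 > 0" "c2 > 0" "cv > 0" using tt t1 htv c1_def c2_def cv_def by simp_all
  have r1: "\<beta>/(\<tau>+\<theta>) = \<beta>*c1" using c1_def by simp
  have r2: "phi st \<tau> \<theta> \<sigma>/((1+\<tau>)*\<beta>) = phi st \<tau> \<theta> \<sigma>*c2*cb" using c2_def cb_def by simp
  have r3: "4 * (1 + \<tau> + tv) * phi st \<tau> \<theta> \<sigma> / ((\<tau> + \<theta>) * (1 + \<tau>) * tv) = 4 * (1 + \<tau> + tv) * phi st \<tau> \<theta> \<sigma> * c1 * c2 * cv"
    using c1_def c2_def cv_def by simp
  define Ph where "Ph = phi st \<tau> \<theta> \<sigma>"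
  define Pt where "Pt = phi_tilde st \<tau> \<theta> \<sigma>"
  define Phat where "Phat = phi_hat st \<tau> \<theta> \<sigma>"
  have iden: "(\<sigma>*(gx + hy + \<beta>*(1-\<tau>)*pp + \<beta>*c1*(rr - 2*(1-\<tau>)*rp + (1-\<tau>)^2*pp))
     + 4 * (1 + \<tau> + tv) * Ph * c1 * c2 * cv * a0 - \<beta>*c1*(Pt*rr + Ph*c2*cb*hy))
   - (ex + \<beta>*c1 * ((\<tau>+\<theta>-1)^2*rr + 2*(\<tau>+\<theta>-1)*(1-\<tau>)*rp + (1-\<tau>)^2*pp))
   = (\<sigma>-sh)*gx + (st*\<beta>*(rr-2*rp+pp) + sh*gx - ex)
     + c1*\<beta>*Phat*pp + c1*\<sigma>*(\<tau>+\<theta>)*hy + 2*Ph*c1*cv*(2*a0 - \<beta>*tv*rp) + Ph*c1*c2*(4*a0 - hy)"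
    using c1 c2 cb cv unfolding Ph_def Pt_def Phat_def phi_def phi_hat_def phi_tilde_def
    by algebra
  have T1: "c1*\<beta>*Phat*pp \<ge> 0" using c0 b ph(2) pp Phat_def by simp
  have T2: "c1*\<sigma>*(\<tau>+\<theta>)*hy \<ge> 0" using c0 s0 tt hy by simp
  have T3: "2*Ph*c1*cv*(2*a0 - \<beta>*tv*rp) \<ge> 0" using c0 ph(1) K1 Ph_def by simp
  have T4: "Ph*c1*c2*(4*a0 - hy) \<ge> 0" using c0 ph(1) K2 hy Ph_def by simp
  have T6: "(\<sigma>-sh)*gx \<ge> 0" using shs gx by simp
  have T7: "st*\<beta>*(rr-2*rp+pp) + sh*gx - ex \<ge> 0" using ex by simp
  show ?thesis unfolding r1 r2 r3 using iden T1 T2 T3 T4 T6 T7 unfolding Ph_def Pt_def by linarith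
qed

lemma Qprime:
  fixes P Qc t rp rr pp :: real
  assumes P: "P > 0" and Qc: "Qc > 0" and t: "t \<ge> 0" and th: "sqrt (P * Qc) - 2 * t \<ge> 0"
    and cs: "rp^2 \<le> rr * pp" and rr: "rr \<ge> 0" and pp: "pp \<ge> 0"
  shows "Qc * rr + P * pp - 4 * t * rp \<ge> 2 * (sqrt (P * Qc) - 2 * t) * rp"
    and "Qc * rr + P * pp - 4 * t * rp \<ge> 0"
proof -
  define S where "S = sqrt (P * Qc)"
  define m where "m = sqrt (rr * pp)"
  have m0: "m \<ge> 0" using rr pp m_def by simp
  have am: "Qc * rr + P * pp \<ge> 2 * S * m"
  proof -
    define a where "a = sqrt (Qc * rr)"
    define c where "c = sqrt (P * pp)"
    have "(a - c)^2 \<ge> 0" by simp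
    moreover have "a^2 = Qc * rr" "c^2 = P * pp" using a_def c_def Qc rr P pp by simp_all
    moreover have "a * c = S * m" unfolding a_def c_def S_def m_def
      by (simp add: real_sqrt_mult[symmetric] algebra_simps)
    ultimately show ?thesis by (simp add: power2_eq_square algebra_simps)
  qed
  have rpm: "\<bar>rp\<bar> \<le> m"
  proof -
    have "sqrt (rp^2) \<le> m" unfolding m_def using cs by (rule real_sqrt_le_mono)
    thus ?thesis by simp
  qed
  have S0: "S \<ge> 0" using P Qc S_def by simp
  have Sm: "S * \<bar>rp\<bar> \<le> S * m" using rpm S0 by (simp add: mult_left_mono)
  have Sr: "S * rp \<le> S * \<bar>rp\<bar>" using S0 by (simp add: mult_left_mono)
  have "2 * (S - 2 * t) * rp \<le> Qc * rr + P * pp - 4 * t * rp"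
    using am Sm Sr by (simp add: algebra_simps)
  thus "Qc * rr + P * pp - 4 * t * rp \<ge> 2 * (sqrt (P * Qc) - 2 * t) * rp" using S_def by simp
  show "Qc * rr + P * pp - 4 * t * rp \<ge> 0"
  proof (cases "rp \<ge> 0")
    case True
    hence "2 * (S - 2 * t) * rp \<ge> 0" using th S_def by simp
    moreover have "S * rp \<le> S * m" using Sm True by simp
    ultimately show ?thesis using am S_def by (simp add: algebra_simps)
  next
    case False
    have "S * \<bar>rp\<bar> \<ge> 0" using S0 by simp
    moreover have "t * rp \<le> 0" using False t by (simp add: mult_nonneg_nonpos)
    ultimately show ?thesis using am Sm by linarith
  qed
qed

lemma K_real:
  fixes \<beta> \<tau> \<theta> st sh rr pp rp hy gx ex a0 a1 X1 e1 g0 h0 hyS1 W wR P00 P0p :: real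
  assumes b: "\<beta> > 0" and tt: "\<tau> + \<theta> > 0"
    and H1: "a1 + X1 - e1 \<le> a0"
    and A1: "a1 \<ge> hyS1 + \<beta>*(1-\<tau>)*(P00 - 2*P0p + pp) + (W + 2*((\<tau>+\<theta>)*\<beta>)*wR + ((\<tau>+\<theta>)*\<beta>)^2*rr) / ((\<tau>+\<theta>)*\<beta>)"
    and X1: "X1 = gx + hy + \<beta>*(1-\<tau>)*pp + \<beta>/(\<tau>+\<theta>)*(rr - 2*(1-\<tau>)*rp + (1-\<tau>)^2*pp)"
    and e1: "e1 = ex + \<beta>/(\<tau>+\<theta>) * ((\<tau>+\<theta>-1)^2*rr + 2*(\<tau>+\<theta>-1)*(1-\<tau>)*rp + (1-\<tau>)^2*pp)"
    and a0: "a0 = g0 + h0 + \<beta>*(1-\<tau>)*P00 + W / ((\<tau>+\<theta>)*\<beta>)"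
    and ex: "ex \<le> st * \<beta> * (rr - 2 * rp + pp) + sh * gx" and sh: "sh \<le> 1" and gx: "gx \<ge> 0"
    and nn: "g0 \<ge> 0" "h0 \<ge> 0" "hyS1 \<ge> 0" "hy \<ge> 0" "rr \<ge> 0" "pp \<ge> 0" "rp^2 \<le> rr * pp"
    and t1: "1 - \<tau> \<ge> 0"
    and Y1: "4*P00 - 4*P0p + pp \<ge> 0"
    and Y2: "4*W + 4*((\<tau>+\<theta>)*\<beta>)*wR + ((\<tau>+\<theta>)*\<beta>)^2*rr \<ge> 0"
    and PQ: "3 - 3 * \<tau> - 2 * st > 0" "4 - \<tau> - \<theta> - 2 * st > 0" "1 - \<tau> - st \<ge> 0"
    and vt: "sqrt ((3 - 3 * \<tau> - 2 * st) * (4 - \<tau> - \<theta> - 2 * st)) - 2 * (1 - \<tau> - st) \<ge> 0"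
  shows "\<beta> * (sqrt ((3 - 3 * \<tau> - 2 * st) * (4 - \<tau> - \<theta> - 2 * st)) - 2 * (1 - \<tau> - st)) * rp \<le> 2 * a0"
    and "hy \<le> 2 * a0"
proof -
  define c1 where "c1 = 1 / (\<tau> + \<theta>)"
  define cb where "cb = 1 / \<beta>"
  have c1: "c1 * (\<tau> + \<theta>) = 1" using tt c1_def by simp
  have cb: "cb * \<beta> = 1" using b cb_def by simp
  have c0: "c1 > 0" "cb > 0" using tt b c1_def cb_def by simp_all
  have r1: "\<beta>/(\<tau>+\<theta>) = \<beta>*c1" using c1_def by simp
  have r2: "\<And>z. z / ((\<tau>+\<theta>)*\<beta>) = z * c1 * cb" using c1_def cb_def by simp
  define Qp where "Qp = (4 - \<tau> - \<theta> - 2 * st) * rr + (3 - 3 * \<tau> - 2 * st) * pp - 4 * (1 - \<tau> - st) * rp"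
  have iden: "2 * a0 - hy - (\<beta>/2) * Qp
     = (a0 - (a1 + X1 - e1)) + (a1 - (hyS1 + \<beta>*(1-\<tau>)*(P00 - 2*P0p + pp) + (W + 2*((\<tau>+\<theta>)*\<beta>)*wR + ((\<tau>+\<theta>)*\<beta>)^2*rr) * c1 * cb))
       + hyS1 + (1 - sh) * gx + (st * \<beta> * (rr - 2 * rp + pp) + sh * gx - ex) + g0 + h0
       + (\<beta>*(1-\<tau>)/2) * (4*P00 - 4*P0p + pp) + (c1*cb/2) * (4*W + 4*((\<tau>+\<theta>)*\<beta>)*wR + ((\<tau>+\<theta>)*\<beta>)^2*rr)"
    using c1 cb unfolding X1 e1 a0 r1 r2 Qp_def by algebra
  have T: "(a0 - (a1 + X1 - e1)) \<ge> 0" "(a1 - (hyS1 + \<beta>*(1-\<tau>)*(P00 - 2*P0p + pp) + (W + 2*((\<tau>+\<theta>)*\<beta>)*wR + ((\<tau>+\<theta>)*\<beta>)^2*rr) * c1 * cb)) \<ge> 0"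
    "(1 - sh) * gx \<ge> 0" "st * \<beta> * (rr - 2 * rp + pp) + sh * gx - ex \<ge> 0"
    "(\<beta>*(1-\<tau>)/2) * (4*P00 - 4*P0p + pp) \<ge> 0" "(c1*cb/2) * (4*W + 4*((\<tau>+\<theta>)*\<beta>)*wR + ((\<tau>+\<theta>)*\<beta>)^2*rr) \<ge> 0"
    using H1 A1 r2 sh gx ex b t1 Y1 Y2 c0 by simp_all
  have main: "hy + (\<beta>/2) * Qp \<le> 2 * a0" using iden T nn by linarith
  have Q1: "Qp \<ge> 2 * (sqrt ((3 - 3 * \<tau> - 2 * st) * (4 - \<tau> - \<theta> - 2 * st)) - 2 * (1 - \<tau> - st)) * rp"
    and Q2: "Qp \<ge> 0"
    unfolding Qp_def using Qprime[OF PQ(1) PQ(2) PQ(3) _ nn(7) nn(5) nn(6)] vt by (simp_all add: mult.commute)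
  define V where "V = sqrt ((3 - 3 * \<tau> - 2 * st) * (4 - \<tau> - \<theta> - 2 * st)) - 2 * (1 - \<tau> - st)"
  have "(\<beta>/2) * (2 * V * rp) \<le> (\<beta>/2) * Qp"
    using Q1 b unfolding V_def by (intro mult_left_mono) auto
  moreover have "(\<beta>/2) * (2 * V * rp) = \<beta> * V * rp" by simp
  ultimately have "\<beta> * V * rp \<le> 2 * a0" using main nn(4) by linarith
  thus "\<beta> * (sqrt ((3 - 3 * \<tau> - 2 * st) * (4 - \<tau> - \<theta> - 2 * st)) - 2 * (1 - \<tau> - st)) * rp \<le> 2 * a0"
    unfolding V_def .
  have "(\<beta>/2) * Qp \<ge> 0" using Q2 b by simp
  thus "hy \<le> 2 * a0" using main by simp
qed

lemma lyap_id:
  fixes M :: "real^'k^'k"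
  assumes sym: "transpose M = M"
  shows "qnorm2 M (d - bb) = qnorm2 M (d - c) - qnorm2 M (a - c) + qnorm2 M (a - bb) - 2 * inner (M *v (c - bb)) (a - d)"
proof -
  have 1: "qnorm2 M (d - bb) = qnorm2 M (d - c) + 2 * inner (M *v (d - c)) (c - bb) + qnorm2 M (c - bb)"
    using qn_add[OF sym, of "d - c" "c - bb"] by simp
  have 2: "qnorm2 M (a - bb) = qnorm2 M (a - c) + 2 * inner (M *v (a - c)) (c - bb) + qnorm2 M (c - bb)"
    using qn_add[OF sym, of "a - c" "c - bb"] by simp
  have "inner (M *v (c - bb)) (a - d) = inner (M *v (a - d)) (c - bb)" by (rule qn_swap[OF sym])
  also have "\<dots> = inner (M *v ((a - c) - (d - c))) (c - bb)" by simp
  finally have 3: "inner (M *v (c - bb)) (a - d) = inner (M *v (a - c)) (c - bb) - inner (M *v (d - c)) (c - bb)"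
    by (simp only: matrix_vector_mult_diff_distrib inner_diff_left)
  show ?thesis using 1 2 3 by linarith
qed

lemma cs_gen: "(inner a1 b1)^2 \<le> (norm a1)^2 * (norm (b1::'a::real_inner))^2"
proof -
  have "\<bar>inner a1 b1\<bar> \<le> norm a1 * norm b1" by (rule Cauchy_Schwarz_ineq2)
  hence "\<bar>inner a1 b1\<bar>^2 \<le> (norm a1 * norm b1)^2" by (rule power_mono) simp
  thus ?thesis by (simp add: power_mult_distrib)
qed

context admm begin

definition "ee i = qnorm2 MM (Zt i - Z i)"
definition "XX i = qnorm2 MM (Zt i - Z (i - 1))"
definition "rr i = (norm (R i))^2"
definition "pp i = (norm (p i))^2"
definition "rp i = inner (R i) (p i)"
definition "hy i = qnorm2 H (y i - y (i - 1))"
definition "gx i = qnorm2 G (xt i - x (i - 1))"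
definition "ex i = qnorm2 G (xt i - x i)"
definition "eta i = \<beta>/(\<tau>+\<theta>)*(phi_tilde st \<tau> \<theta> \<sigma> * rr i + phi st \<tau> \<theta> \<sigma>/((1+\<tau>)*\<beta>) * hy i)"

lemma gtg: "i \<ge> 1 \<Longrightarrow> \<gamma>t i - \<gamma> i = ((\<tau>+\<theta>-1)*\<beta>) *\<^sub>R R i + ((1-\<tau>)*\<beta>) *\<^sub>R p i"
proof -
  assume i: "i \<ge> 1"
  show ?thesis unfolding gt_R[OF i] gam_R[OF i] by (simp add: algebra_simps)
qed
lemma gtg1: "i \<ge> 1 \<Longrightarrow> \<gamma>t i - \<gamma> (i - 1) - (\<tau> * \<beta>) *\<^sub>R p i = (-\<beta>) *\<^sub>R R i + ((1-\<tau>)*\<beta>) *\<^sub>R p i"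
proof -
  assume i: "i \<ge> 1"
  show ?thesis unfolding gt_R[OF i] by (simp add: algebra_simps)
qed
lemma gtg2: "i \<ge> 1 \<Longrightarrow> \<gamma>t i - \<gamma> (i - 1) = (-\<beta>) *\<^sub>R R i + \<beta> *\<^sub>R p i"
proof -
  assume i: "i \<ge> 1"
  show ?thesis unfolding gt_R[OF i] by (simp add: algebra_simps)
qed

lemma e_expr: "i \<ge> 1 \<Longrightarrow> ee i = ex i + \<beta>/(\<tau>+\<theta>) * ((\<tau>+\<theta>-1)^2*rr i + 2*(\<tau>+\<theta>-1)*(1-\<tau>)*rp i + (1-\<tau>)^2*pp i)"
proof -
  assume i: "i \<ge> 1"
  have bb: "\<beta> \<noteq> 0" using beta_pos by simp
  have "ee i = ex i + (norm (\<gamma>t i - \<gamma> i))^2 / ((\<tau> + \<theta>) * \<beta>)"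
    unfolding ee_def Zt_def Z_def blk3_diff Mquad ex_def by (simp add: qnorm2_def)
  also have "(norm (\<gamma>t i - \<gamma> i))^2 = \<beta>^2 * ((\<tau>+\<theta>-1)^2*rr i + 2*(\<tau>+\<theta>-1)*(1-\<tau>)*rp i + (1-\<tau>)^2*pp i)"
    unfolding gtg[OF i] norm_sq_lin rr_def pp_def rp_def by (simp add: power2_eq_square algebra_simps)
  finally show ?thesis using bb by (simp add: power2_eq_square)
qed

lemma X_expr: "i \<ge> 1 \<Longrightarrow> XX i = gx i + hy i + \<beta>*(1-\<tau>)*pp i + \<beta>/(\<tau>+\<theta>)*(rr i - 2*(1-\<tau>)*rp i + (1-\<tau>)^2*pp i)"
proof -
  assume i: "i \<ge> 1"
  have bb: "\<beta> \<noteq> 0" using beta_pos by simp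
  have "XX i = gx i + hy i + \<beta>*(1-\<tau>)*pp i + (norm (\<gamma>t i - \<gamma> (i - 1) - (\<tau> * \<beta>) *\<^sub>R p i))^2 / ((\<tau> + \<theta>) * \<beta>)"
    unfolding XX_def Zt_def Z_def blk3_diff Mquad gx_def hy_def pp_def p_def by simp
  also have "(norm (\<gamma>t i - \<gamma> (i - 1) - (\<tau> * \<beta>) *\<^sub>R p i))^2 = \<beta>^2 * (rr i - 2*(1-\<tau>)*rp i + (1-\<tau>)^2*pp i)"
    unfolding gtg1[OF i] norm_sq_lin rr_def pp_def rp_def by (simp add: power2_eq_square algebra_simps)
  finally show ?thesis using bb by (simp add: power2_eq_square)
qed

lemma inex: "i \<ge> 1 \<Longrightarrow> ex i \<le> st * \<beta> * (rr i - 2 * rp i + pp i) + sh * gx i"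
proof -
  assume i: "i \<ge> 1"
  have bb: "\<beta> \<noteq> 0" using beta_pos by simp
  have "(norm (\<gamma>t i - \<gamma> (i - 1)))^2 = \<beta>^2 * (rr i - 2 * rp i + pp i)"
    unfolding gtg2[OF i] norm_sq_lin rr_def pp_def rp_def by (simp add: power2_eq_square algebra_simps)
  hence "st / \<beta> * (norm (\<gamma>t i - \<gamma> (i - 1)))^2 = st * \<beta> * (rr i - 2 * rp i + pp i)"
    using bb by (simp add: power2_eq_square)
  moreover have "qnorm2 G (xt i - x i) \<le> st / \<beta> * (norm (\<gamma>t i - \<gamma> (i - 1)))^2 + sh * qnorm2 G (xt i - x (i - 1))"
    using inexact[OF i] unfolding xe[OF i] .
  ultimately show ?thesis unfolding ex_def gx_def by simp
qed

lemma rr_nn: "rr i \<ge> 0" and pp_nn: "pp i \<ge> 0" and hy_nn: "hy i \<ge> 0" and gx_nn: "gx i \<ge> 0"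
  unfolding rr_def pp_def hy_def gx_def using Hpsd Gpsd by auto

lemma rp_cs: "(rp i)^2 \<le> rr i * pp i" unfolding rp_def rr_def pp_def by (rule cs_gen)

lemma eta_nn: "eta i \<ge> 0"
proof -
  have "phi_tilde st \<tau> \<theta> \<sigma> * rr i \<ge> 0" using phi_conds(3) rr_nn by simp
  moreover have "phi st \<tau> \<theta> \<sigma>/((1+\<tau>)*\<beta>) * hy i \<ge> 0" using phi_conds(1) par beta_pos hy_nn by simp
  ultimately show ?thesis unfolding eta_def using par beta_pos by simp
qed

lemma mono_g:
  assumes i: "i \<ge> 2"
  shows "(1-\<theta>)*\<beta>*inner (R (i - 1)) (p i) - (1+\<tau>)*\<beta>*rp i + \<tau>*\<beta>*pp i - hy i
         + inner (H *v (y (i - 1) - y (i - 1 - 1))) (y i - y (i - 1)) \<ge> 0"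
proof -
  have i1: "i \<ge> 1" "i - 1 \<ge> 1" using i by auto
  have m: "inner (sg i - sg (i - 1)) (y i - y (i - 1)) \<ge> 0"
    by (rule subdiff_mono[OF g_prop(1) sub_g[OF i1(1)] sub_g[OF i1(2)]])
  have gd: "\<gamma>h i - \<beta> *\<^sub>R R i - (\<gamma>h (i - 1) - \<beta> *\<^sub>R R (i - 1))
          = ((1-\<theta>)*\<beta>) *\<^sub>R R (i - 1) - ((1+\<tau>)*\<beta>) *\<^sub>R R i + (\<tau>*\<beta>) *\<^sub>R p i"
  proof -
    have "\<gamma> (i - 1) = \<gamma>h (i - 1) - (\<theta> * \<beta>) *\<^sub>R R (i - 1)" using g_upd[OF i1(2)] unfolding R_def .
    hence e1: "\<gamma>h i = \<gamma>h (i - 1) - (\<theta> * \<beta>) *\<^sub>R R (i - 1) - (\<tau> * \<beta>) *\<^sub>R (R i - p i)"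
      using gh_R[OF i1(1)] by simp
    show ?thesis unfolding e1 by (simp add: algebra_simps)
  qed
  have "inner (sg i - sg (i - 1)) (y i - y (i - 1))
     = inner (\<gamma>h i - \<beta> *\<^sub>R R i - (\<gamma>h (i - 1) - \<beta> *\<^sub>R R (i - 1))) (p i)
       - hy i + inner (H *v (y (i - 1) - y (i - 1 - 1))) (y i - y (i - 1))"
  proof -
    have a1: "inner (transpose B *v z) (y i - y (i - 1)) = inner z (p i)" for z
      unfolding p_def using adjA[of "transpose B" z "y i - y (i - 1)"] by simp
    define X where "X = \<gamma>h i - \<beta> *\<^sub>R R i - (\<gamma>h (i - 1) - \<beta> *\<^sub>R R (i - 1))"
    have "sg i - sg (i - 1) = transpose B *v X - (H *v (y i - y (i - 1)) - H *v (y (i - 1) - y (i - 1 - 1)))"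
      unfolding sg_def X_def by (simp add: matrix_vector_mult_diff_distrib algebra_simps)
    hence "inner (sg i - sg (i - 1)) (y i - y (i - 1)) = inner X (p i) - hy i
        + inner (H *v (y (i - 1) - y (i - 1 - 1))) (y i - y (i - 1))"
      unfolding hy_def qnorm2_def using a1[of X] by (simp add: inner_diff_left)
    thus ?thesis unfolding X_def .
  qed
  also have "\<dots> = (1-\<theta>)*\<beta>*inner (R (i - 1)) (p i) - (1+\<tau>)*\<beta>*rp i + \<tau>*\<beta>*pp i - hy i
         + inner (H *v (y (i - 1) - y (i - 1 - 1))) (y i - y (i - 1))"
    unfolding gd rp_def pp_def by (simp add: inner_diff_left inner_add_left power2_norm_eq_inner)
  finally show ?thesis using m by simp
qed

lemma hh2: "2 * inner (H *v (y (i - 1) - y (i - 1 - 1))) (y i - y (i - 1)) \<le> hy i + hy (i - 1)"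
proof -
  have "qnorm2 H ((y (i - 1) - y (i - 1 - 1)) - (y i - y (i - 1))) \<ge> 0" by (rule Hpsd)
  thus ?thesis unfolding qn_diff[OF Hsym] hy_def by simp
qed

lemma err_step:
  assumes i: "i \<ge> 2"
  shows "ee i \<le> \<sigma> * XX i + eta (i - 1) - eta i"
proof -
  have i1: "i \<ge> 1" "i - 1 \<ge> 1" using i by auto
  have q2: "(inner (R (i - 1)) (p i))^2 \<le> rr (i - 1) * pp i" unfolding rr_def pp_def by (rule cs_gen)
  have s0: "\<sigma> \<ge> 0" using sigma_range sh_range by simp
  have "ee i \<le> \<sigma> * XX i + \<beta>/(\<tau>+\<theta>)*(phi_tilde st \<tau> \<theta> \<sigma>*rr (i - 1) + phi st \<tau> \<theta> \<sigma>/((1+\<tau>)*\<beta>)*hy (i - 1))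
     - \<beta>/(\<tau>+\<theta>)*(phi_tilde st \<tau> \<theta> \<sigma>*rr i + phi st \<tau> \<theta> \<sigma>/((1+\<tau>)*\<beta>)*hy i)"
    unfolding e_expr[OF i1(1)] X_expr[OF i1(1)]
    using err_step_real[OF beta_pos par(1) par(5) inex[OF i1(1)] sigma_range(1) gx_nn hy_nn mono_g[OF i] hh2 q2
        rr_nn pp_nn s0 phi_conds(1) phi_conds(3) phi_conds(4)] by (simp add: algebra_simps)
  thus ?thesis unfolding eta_def .
qed

end

context admm begin

definition "issol xs ys gs \<longleftrightarrow> transpose A *v gs \<in> subdiff f xs \<and> transpose B *v gs \<in> subdiff g ys
                             \<and> A *v xs + B *v ys - b = 0"

lemma mono_sol:
  assumes s: "issol xs ys gs" and i: "i \<ge> 1"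
  shows "inner (MM *v (Z (i - 1) - Z i)) (Zt i - blk3 xs ys gs) \<ge> 0"
proof -
  have s1: "transpose A *v gs \<in> subdiff f xs" "transpose B *v gs \<in> subdiff g ys" "A *v xs + B *v ys - b = 0"
    using s unfolding issol_def by auto
  have mf: "inner (u i + transpose A *v \<gamma>t i - transpose A *v gs) (xt i - xs) \<ge> 0"
    by (rule subdiff_mono[OF f_prop(1) sub_f[OF i] s1(1)])
  have mg: "inner (v i + transpose B *v \<gamma>t i - transpose B *v gs) (y i - ys) \<ge> 0"
    using subdiff_mono[OF g_prop(1) sub_g[OF i] s1(2)] v_sg[OF i] by simp
  have eA: "inner (transpose A *v z) (xt i - xs) = inner z (A *v (xt i - xs))" for z
    using adjA[of "transpose A" z "xt i - xs"] by simp
  have eB: "inner (transpose B *v z) (y i - ys) = inner z (B *v (y i - ys))" for z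
    using adjA[of "transpose B" z "y i - ys"] by simp
  have wz: "A *v (xt i - xs) + B *v (y i - ys) = w i"
    using s1(3) w_R[OF i] unfolding R_def by (simp add: matrix_vector_mult_diff_distrib algebra_simps)
  have "inner (MM *v (Z (i - 1) - Z i)) (Zt i - blk3 xs ys gs)
      = inner (u i) (xt i - xs) + inner (v i) (y i - ys) + inner (w i) (\<gamma>t i - gs)"
    unfolding resid[OF i] Zt_def blk3_diff blk3_inner ..
  also have "\<dots> = inner (u i + transpose A *v \<gamma>t i - transpose A *v gs) (xt i - xs)
              + inner (v i + transpose B *v \<gamma>t i - transpose B *v gs) (y i - ys)"
  proof -
    have "inner (u i + transpose A *v \<gamma>t i - transpose A *v gs) (xt i - xs)
        = inner (u i) (xt i - xs) + inner (\<gamma>t i - gs) (A *v (xt i - xs))"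
      using eA[of "\<gamma>t i - gs"] by (simp add: inner_add_left inner_diff_left matrix_vector_mult_diff_distrib)
    moreover have "inner (v i + transpose B *v \<gamma>t i - transpose B *v gs) (y i - ys)
        = inner (v i) (y i - ys) + inner (\<gamma>t i - gs) (B *v (y i - ys))"
      using eB[of "\<gamma>t i - gs"] by (simp add: inner_add_left inner_diff_left matrix_vector_mult_diff_distrib)
    moreover have "inner (w i) (\<gamma>t i - gs) = inner (\<gamma>t i - gs) (A *v (xt i - xs)) + inner (\<gamma>t i - gs) (B *v (y i - ys))"
      unfolding wz[symmetric] by (simp add: inner_add_right inner_commute)
    ultimately show ?thesis by simp
  qed
  finally show ?thesis using mf mg by simp
qed

lemma lyap:
  assumes i: "i \<ge> 1"
  shows "qnorm2 MM (Zs - Z i) = qnorm2 MM (Zs - Z (i - 1)) - XX i + ee i - 2 * inner (MM *v (Z (i - 1) - Z i)) (Zt i - Zs)"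
  unfolding XX_def ee_def by (rule lyap_id[OF Msym])

definition "C2 = 1 + 4 * (1 + \<tau> + vartheta st \<tau> \<theta>) * phi st \<tau> \<theta> \<sigma> / ((\<tau> + \<theta>) * (1 + \<tau>) * vartheta st \<tau> \<theta>)"

lemma C2_ge: "C2 \<ge> 1"
proof -
  have "vartheta st \<tau> \<theta> > 0" using vartheta_facts(1)[OF st_range tau_theta] .
  hence "4 * (1 + \<tau> + vartheta st \<tau> \<theta>) * phi st \<tau> \<theta> \<sigma> / ((\<tau> + \<theta>) * (1 + \<tau>) * vartheta st \<tau> \<theta>) \<ge> 0"
    using par phi_conds(1) by simp
  thus ?thesis unfolding C2_def by simp
qed

lemma err_first:
  assumes s: "issol xs ys gs"
  defines "a0 \<equiv> qnorm2 MM (blk3 xs ys gs - Z 0)"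
  shows "ee 1 \<le> \<sigma> * XX 1 + (C2 - 1) * a0 - eta 1"
proof -
  define Zs where "Zs = blk3 xs ys gs"
  define a1 where "a1 = qnorm2 MM (Zs - Z 1)"
  have one: "(1::nat) \<ge> 1" by simp
  have H1: "a1 + XX 1 - ee 1 \<le> a0"
    using lyap[OF one, of Zs] mono_sol[OF s one] unfolding a1_def a0_def Zs_def by simp
  define P0 where "P0 = B *v (ys - y 0)"
  define \<omega> where "\<omega> = (gs - \<gamma> 0) - (\<tau> * \<beta>) *\<^sub>R P0"
  define c where "c = (\<tau> + \<theta>) * \<beta>"
  have c0: "c > 0" using par beta_pos c_def by simp
  have a0e: "a0 = qnorm2 G (xs - x 0) + qnorm2 H (ys - y 0) + \<beta> * (1 - \<tau>) * (norm P0)^2 + (norm \<omega>)^2 / c"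
    unfolding a0_def Z_def blk3_diff Mquad P0_def \<omega>_def c_def ..
  have By1: "B *v (ys - y 1) = P0 - p 1" unfolding P0_def p_def by (simp add: matrix_vector_mult_diff_distrib)
  have g1: "gs - \<gamma> 1 - (\<tau> * \<beta>) *\<^sub>R (P0 - p 1) = 1 *\<^sub>R \<omega> + c *\<^sub>R R 1"
  proof -
    have "\<gamma> 1 = \<gamma> 0 - (((\<tau> + \<theta>) * \<beta>) *\<^sub>R R 1 - (\<tau> * \<beta>) *\<^sub>R p 1)" using gam_diff[OF one] by (simp add: algebra_simps)
    thus ?thesis unfolding \<omega>_def c_def by (simp add: algebra_simps)
  qed
  have a1e: "a1 = qnorm2 G (xs - x 1) + qnorm2 H (ys - y 1) + \<beta> * (1 - \<tau>) * (norm (P0 - p 1))^2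
      + (norm (gs - \<gamma> 1 - (\<tau> * \<beta>) *\<^sub>R (P0 - p 1)))^2 / c"
    unfolding a1_def Zs_def Z_def blk3_diff Mquad By1 c_def ..
  have pm: "P0 - p 1 = 1 *\<^sub>R P0 + (-1) *\<^sub>R p 1" by simp
  have A1: "a1 \<ge> qnorm2 H (ys - y 1) + \<beta>*(1-\<tau>)*((norm P0)^2 - 2*inner P0 (p 1) + pp 1)
      + ((norm \<omega>)^2 + 2*c*inner \<omega> (R 1) + c^2*rr 1) / c"
    unfolding a1e g1 unfolding pm norm_sq_lin pp_def rr_def using Gpsd[of "xs - x 1"] by simp
  have Y1: "4*(norm P0)^2 - 4*inner P0 (p 1) + pp 1 \<ge> 0"
  proof -
    have "(norm (2 *\<^sub>R P0 + (-1) *\<^sub>R p 1))^2 = 4*(norm P0)^2 - 4*inner P0 (p 1) + pp 1"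
      unfolding norm_sq_lin pp_def by simp
    moreover have "(norm (2 *\<^sub>R P0 + (-1) *\<^sub>R p 1))^2 \<ge> 0" by simp
    ultimately show ?thesis by linarith
  qed
  have Y2: "4*(norm \<omega>)^2 + 4*c*inner \<omega> (R 1) + c^2*rr 1 \<ge> 0"
  proof -
    have "(norm (2 *\<^sub>R \<omega> + c *\<^sub>R R 1))^2 = 4*(norm \<omega>)^2 + 4*c*inner \<omega> (R 1) + c^2*rr 1"
      unfolding norm_sq_lin rr_def by simp
    moreover have "(norm (2 *\<^sub>R \<omega> + c *\<^sub>R R 1))^2 \<ge> 0" by simp
    ultimately show ?thesis by linarith
  qed
  have VF: "3 - 3 * \<tau> - 2 * st > 0" "4 - \<tau> - \<theta> - 2 * st > 0"
    "vartheta st \<tau> \<theta> = sqrt ((3 - 3 * \<tau> - 2 * st) * (4 - \<tau> - \<theta> - 2 * st)) - 2 * (1 - \<tau> - st)"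
    "vartheta st \<tau> \<theta> > 0"
    using vartheta_facts[OF st_range tau_theta] by auto
  have t0: "1 - \<tau> - st \<ge> 0" "1 - \<tau> \<ge> 0" using par by auto
  have K: "\<beta> * (sqrt ((3 - 3 * \<tau> - 2 * st) * (4 - \<tau> - \<theta> - 2 * st)) - 2 * (1 - \<tau> - st)) * rp 1 \<le> 2 * a0"
          "hy 1 \<le> 2 * a0"
    using K_real[OF beta_pos par(1) H1 A1[unfolded c_def] X_expr[OF one] e_expr[OF one] a0e[unfolded c_def]
        inex[OF one] _ gx_nn Gpsd Hpsd Hpsd hy_nn rr_nn pp_nn rp_cs t0(2) Y1 Y2[unfolded c_def] VF(1) VF(2) t0(1)]
      VF(3) VF(4) sh_range by auto
  have s0: "\<sigma> \<ge> 0" using sigma_range sh_range by simp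
  have K1': "\<beta> * vartheta st \<tau> \<theta> * rp 1 \<le> 2 * a0" using K(1) VF(3) by simp
  have "ee 1 \<le> \<sigma> * XX 1 + 4 * (1 + \<tau> + vartheta st \<tau> \<theta>) * phi st \<tau> \<theta> \<sigma> / ((\<tau> + \<theta>) * (1 + \<tau>) * vartheta st \<tau> \<theta>) * a0
      - \<beta>/(\<tau>+\<theta>)*(phi_tilde st \<tau> \<theta> \<sigma>*rr 1 + phi st \<tau> \<theta> \<sigma>/((1+\<tau>)*\<beta>)*hy 1)"
    unfolding e_expr[OF one] X_expr[OF one]
    by (rule err_first_real[OF beta_pos par(1) par(5) VF(4) inex[OF one] sigma_range(1) gx_nn hy_nn pp_nn s0
        K1' K(2) phi_conds(1) phi_conds(2)])
  thus ?thesis unfolding eta_def C2_def by simp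
qed

end

lemma telescope: "(\<Sum>i = 1..(k::nat). F (i - 1) - F i) = F 0 - (F k :: 'a::ab_group_add)"
  by (induction k) (simp_all add: algebra_simps)

lemma telescope_real: "(\<Sum>i = 1..(k::nat). (F (i - 1) - F i :: real)) = F 0 - F k"
  by (rule telescope)

lemma mv_sum: "finite S \<Longrightarrow> M *v (\<Sum>i\<in>S. z i) = (\<Sum>i\<in>S. M *v (z i :: real^'k))" for M :: "real^'k^'l"
  by (induction S rule: finite_induct) (simp_all add: matrix_vector_right_distrib)

lemma avg_mv: "avg k (\<lambda>i. M *v z i) = M *v avg k (z :: nat \<Rightarrow> real^'k)" for M :: "real^'k^'l"
  unfolding avg_def by (simp add: mv_sum matrix_vector_mult_scaleR)

lemma avg_add: "avg k (\<lambda>i. f i + g i) = avg k f + avg k (g :: nat \<Rightarrow> 'a::real_vector)"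
  unfolding avg_def by (simp add: sum.distrib scaleR_add_right)
lemma avg_diff: "avg k (\<lambda>i. f i - g i) = avg k f - avg k (g :: nat \<Rightarrow> 'a::real_vector)"
  unfolding avg_def by (simp add: sum_subtractf scaleR_diff_right)
lemma avg_const: "k \<ge> 1 \<Longrightarrow> avg k (\<lambda>i. c) = (c :: 'a::real_vector)"
  unfolding avg_def by (simp add: sum_constant_scaleR)

lemma psd_sum_bound:
  fixes M :: "real^'k^'k"
  assumes sym: "transpose M = M" and psd: "\<And>z. qnorm2 M z \<ge> 0" and fin: "finite S"
  shows "sqrt (qnorm2 M (\<Sum>i\<in>S. V i)) \<le> (\<Sum>i\<in>S. sqrt (qnorm2 M (V i)))"
  using fin
proof (induction S rule: finite_induct)
  case empty thus ?case by (simp add: qnorm2_def)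
next
  case (insert j S)
  have "sqrt (qnorm2 M (\<Sum>i\<in>insert j S. V i)) = sqrt (qnorm2 M (V j + (\<Sum>i\<in>S. V i)))"
    using insert by simp
  also have "\<dots> \<le> sqrt (qnorm2 M (V j)) + sqrt (qnorm2 M (\<Sum>i\<in>S. V i))" by (rule psd_triangle[OF sym psd])
  also have "\<dots> \<le> sqrt (qnorm2 M (V j)) + (\<Sum>i\<in>S. sqrt (qnorm2 M (V i)))" using insert by simp
  also have "\<dots> = (\<Sum>i\<in>insert j S. sqrt (qnorm2 M (V i)))" using insert by simp
  finally show ?case .
qed

lemma psd_avg_bound:
  fixes M :: "real^'k^'k"
  assumes sym: "transpose M = M" and psd: "\<And>z. qnorm2 M z \<ge> 0" and k: "k \<ge> 1"
    and bd: "\<And>i. 1 \<le> i \<Longrightarrow> i \<le> k \<Longrightarrow> sqrt (qnorm2 M (V i)) \<le> bnd"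
  shows "sqrt (qnorm2 M (avg k V)) \<le> bnd"
proof -
  have "sqrt (qnorm2 M (avg k V)) = (1 / real k) * sqrt (qnorm2 M (\<Sum>i = 1..k. V i))"
    unfolding avg_def qn_scale using k by (simp add: real_sqrt_mult)
  also have "\<dots> \<le> (1 / real k) * (\<Sum>i = 1..k. sqrt (qnorm2 M (V i)))"
    using psd_sum_bound[OF sym psd, of "{1..k}" V] by (intro mult_left_mono) auto
  also have "\<dots> \<le> (1 / real k) * (\<Sum>i = 1..k. bnd)"
    using bd by (intro mult_left_mono sum_mono) auto
  also have "\<dots> = bnd" using k by simp
  finally show ?thesis .
qed

lemma psd_CS_abs:
  fixes M :: "real^'k^'k"
  assumes sym: "transpose M = M" and psd: "\<And>z. qnorm2 M z \<ge> 0"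
  shows "\<bar>inner (M *v a) c\<bar> \<le> sqrt (qnorm2 M a) * sqrt (qnorm2 M c)"
proof -
  have "(inner (M *v a) c)^2 \<le> (sqrt (qnorm2 M a) * sqrt (qnorm2 M c))^2"
    using psd_CS[OF sym psd, of a c] psd[of a] psd[of c] by (simp add: power_mult_distrib)
  thus ?thesis using psd[of a] psd[of c] by (intro power2_le_imp_le[of "\<bar>_\<bar>"]) auto
qed

lemma hpe_real:
  fixes a XX ee eta :: "nat \<Rightarrow> real"
  assumes L1: "\<And>i. i \<ge> 1 \<Longrightarrow> a i \<le> a (i - 1) - XX i + ee i"
    and L2: "\<And>i. i \<ge> 1 \<Longrightarrow> ee i \<le> \<sigma> * XX i + eta (i - 1) - eta i"
    and en: "\<And>i. eta i \<ge> 0" and an: "\<And>i. a i \<ge> 0" and Xn: "\<And>i. XX i \<ge> 0"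
    and s1: "\<sigma> < 1" and s0: "\<sigma> \<ge> 0"
  shows "\<And>i. a i + eta i \<le> a 0 + eta 0"
    and "\<And>i. i \<ge> 1 \<Longrightarrow> ee i \<le> (a 0 + eta 0) / (1 - \<sigma>)"
proof -
  have step: "a i + eta i + (1 - \<sigma>) * XX i \<le> a (i - 1) + eta (i - 1)" if "i \<ge> 1" for i
    using L1[OF that] L2[OF that] by (simp add: algebra_simps)
  have mono: "a i + eta i \<le> a (i - 1) + eta (i - 1)" if "i \<ge> 1" for i
    using step[OF that] Xn[of i] s1 by (smt (verit) mult_nonneg_nonneg)
  show all: "a i + eta i \<le> a 0 + eta 0" for i
  proof (induction i)
    case 0 thus ?case by simp
  next
    case (Suc n) thus ?case using mono[of "Suc n"] by simp
  qed
  show "ee i \<le> (a 0 + eta 0) / (1 - \<sigma>)" if i: "i \<ge> 1" for i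
  proof -
    have X: "(1 - \<sigma>) * XX i \<le> a 0 + eta 0" using step[OF i] all[of "i - 1"] an[of i] en[of i] by linarith
    have e: "eta (i - 1) \<le> a 0 + eta 0" using all[of "i - 1"] an[of "i - 1"] by linarith
    have "ee i \<le> \<sigma> * XX i + eta (i - 1)" using L2[OF i] en[of i] by linarith
    hence "(1 - \<sigma>) * ee i \<le> \<sigma> * ((1 - \<sigma>) * XX i) + (1 - \<sigma>) * eta (i - 1)"
      using s1 by (smt (verit) mult_left_mono distrib_left mult.left_commute)
    also have "\<dots> \<le> \<sigma> * (a 0 + eta 0) + (1 - \<sigma>) * (a 0 + eta 0)"
      using X e s1 s0 by (intro add_mono mult_left_mono) auto
    also have "\<dots> = a 0 + eta 0" by (simp add: algebra_simps)
    finally show ?thesis using s1 by (simp add: field_simps)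
  qed
qed

lemma final_num:
  fixes \<sigma> D :: real
  assumes s: "0 \<le> \<sigma>" "\<sigma> < 1" and D: "D \<ge> 0"
  shows "D + 4 * (sqrt (D / (1 - \<sigma>)) + sqrt D) * sqrt D \<le> 3 * (3 - 2 * \<sigma>) * D / (1 - \<sigma>)"
proof -
  define r where "r = sqrt (1 - \<sigma>)"
  have r0: "r > 0" "r \<le> 1" using s r_def by auto
  have r2: "r^2 = 1 - \<sigma>" using s r_def by simp
  have e1: "sqrt (D / (1 - \<sigma>)) * sqrt D = D / r"
    using D s r_def by (simp add: real_sqrt_divide real_sqrt_mult[symmetric])
  have e2: "sqrt D * sqrt D = D" using D by simp
  have "D + 4 * (sqrt (D / (1 - \<sigma>)) + sqrt D) * sqrt D = D + 4 * (sqrt (D / (1 - \<sigma>)) * sqrt D) + 4 * (sqrt D * sqrt D)"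
    by (simp add: algebra_simps)
  also have "\<dots> = D * (5 + 4 / r)" unfolding e1 e2 by (simp add: algebra_simps)
  finally have lhs: "D + 4 * (sqrt (D / (1 - \<sigma>)) + sqrt D) * sqrt D = D * (5 + 4 / r)" .
  have rhs: "3 * (3 - 2 * \<sigma>) * D / (1 - \<sigma>) = D * (3 * (1 + 2 * r^2) / r^2)"
  proof -
    have sg: "\<sigma> = 1 - r^2" using r2 by simp
    show ?thesis unfolding sg by (simp add: algebra_simps)
  qed
  have key: "5 + 4 / r \<le> 3 * (1 + 2 * r^2) / r^2"
  proof -
    have "(1 - r) * (3 - r) \<ge> 0" using r0 by simp
    hence "5 * r^2 + 4 * r \<le> 3 * (1 + 2 * r^2)" by (simp add: power2_eq_square algebra_simps)
    hence "(5 * r^2 + 4 * r) / r^2 \<le> 3 * (1 + 2 * r^2) / r^2" using r0 by (simp add: divide_right_mono)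
    moreover have "(5 * r^2 + 4 * r) / r^2 = 5 + 4 / r" using r0 by (simp add: power2_eq_square field_simps)
    ultimately show ?thesis by simp
  qed
  have "D * (5 + 4 / r) \<le> D * (3 * (1 + 2 * r^2) / r^2)" using key D by (rule mult_left_mono)
  thus ?thesis unfolding lhs rhs .
qed

lemma avg_blk3: "avg k (\<lambda>i. blk3 (a i) (bb i) (c i)) = blk3 (avg k a) (avg k bb) (avg k c)"
  unfolding avg_def by (simp add: blk3_sum blk3_scaleR)

lemma sum_avg: "k \<ge> 1 \<Longrightarrow> (\<Sum>i = 1..k. z i) = real k *\<^sub>R avg k (z :: nat \<Rightarrow> 'a::real_vector)"
  unfolding avg_def by simp

lemma norm_blk3_comp: "norm xx \<le> norm (blk3 xx yy gg)" "norm yy \<le> norm (blk3 xx yy gg)" "norm gg \<le> norm (blk3 xx yy gg)"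
proof -
  have e: "(norm (blk3 xx yy gg))^2 = (norm xx)^2 + (norm yy)^2 + (norm gg)^2" by (rule blk3_norm2)
  have s1: "(norm xx)^2 \<le> (norm (blk3 xx yy gg))^2" using e zero_le_power2[of "norm yy"] zero_le_power2[of "norm gg"] by linarith
  have s2: "(norm yy)^2 \<le> (norm (blk3 xx yy gg))^2" using e zero_le_power2[of "norm xx"] zero_le_power2[of "norm gg"] by linarith
  have s3: "(norm gg)^2 \<le> (norm (blk3 xx yy gg))^2" using e zero_le_power2[of "norm yy"] zero_le_power2[of "norm xx"] by linarith
  show "norm xx \<le> norm (blk3 xx yy gg)" by (rule power2_le_imp_le[OF s1]) simp
  show "norm yy \<le> norm (blk3 xx yy gg)" by (rule power2_le_imp_le[OF s2]) simp
  show "norm gg \<le> norm (blk3 xx yy gg)" by (rule power2_le_imp_le[OF s3]) simp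
qed

context admm begin

lemma w_lin: "k \<ge> 1 \<Longrightarrow> avg k w = A *v avg k xt + B *v avg k y - b"
proof -
  assume k: "k \<ge> 1"
  have "avg k w = avg k (\<lambda>i. A *v xt i + B *v y i - b)"
    unfolding avg_def using w_R unfolding R_def by (intro arg_cong[where f = "\<lambda>z. _ *\<^sub>R z"] sum.cong) auto
  also have "\<dots> = A *v avg k xt + B *v avg k y - b"
    using k by (simp add: avg_add avg_diff avg_mv avg_const)
  finally show ?thesis .
qed

definition "eps_a k = (1 / real k) * (\<Sum>i = 1..k. inner (u i + transpose A *v \<gamma>t i) (xt i - avg k xt))"
definition "zeta_a k = (1 / real k) * (\<Sum>i = 1..k. inner (v i + transpose B *v \<gamma>t i) (y i - avg k y))"

lemma incl_f: "k \<ge> 1 \<Longrightarrow> eps_a k \<ge> 0 \<and> avg k u \<in> (\<lambda>s. s - transpose A *v avg k \<gamma>t) ` eps_subdiff f (eps_a k) (avg k xt)"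
proof -
  assume k: "k \<ge> 1"
  have T: "eps_a k \<ge> 0 \<and> avg k (\<lambda>i. u i + transpose A *v \<gamma>t i) \<in> eps_subdiff f (eps_a k) (avg k xt)"
    unfolding eps_a_def using transport[OF f_prop k, of "\<lambda>i. u i + transpose A *v \<gamma>t i" xt] sub_f by auto
  have "avg k (\<lambda>i. u i + transpose A *v \<gamma>t i) = avg k u + transpose A *v avg k \<gamma>t"
    by (simp add: avg_add avg_mv)
  hence "avg k u = avg k (\<lambda>i. u i + transpose A *v \<gamma>t i) - transpose A *v avg k \<gamma>t" by simp
  thus ?thesis using T by blast
qed

lemma incl_g: "k \<ge> 1 \<Longrightarrow> zeta_a k \<ge> 0 \<and> avg k v \<in> (\<lambda>s. s - transpose B *v avg k \<gamma>t) ` eps_subdiff g (zeta_a k) (avg k y)"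
proof -
  assume k: "k \<ge> 1"
  have sg': "i \<ge> 1 \<Longrightarrow> v i + transpose B *v \<gamma>t i \<in> subdiff g (y i)" for i using sub_g v_sg by simp
  have T: "zeta_a k \<ge> 0 \<and> avg k (\<lambda>i. v i + transpose B *v \<gamma>t i) \<in> eps_subdiff g (zeta_a k) (avg k y)"
    unfolding zeta_a_def using transport[OF g_prop k, of "\<lambda>i. v i + transpose B *v \<gamma>t i" y] sg' by auto
  have "avg k (\<lambda>i. v i + transpose B *v \<gamma>t i) = avg k v + transpose B *v avg k \<gamma>t"
    by (simp add: avg_add avg_mv)
  hence "avg k v = avg k (\<lambda>i. v i + transpose B *v \<gamma>t i) - transpose B *v avg k \<gamma>t" by simp
  thus ?thesis using T by blast
qed

lemma resid_avg: "k \<ge> 1 \<Longrightarrow> blk3 (avg k u) (avg k v) (avg k w) = (1 / real k) *\<^sub>R (MM *v (Z 0 - Z k))"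
proof -
  assume k: "k \<ge> 1"
  have "blk3 (avg k u) (avg k v) (avg k w) = avg k (\<lambda>i. blk3 (u i) (v i) (w i))" by (simp add: avg_blk3)
  also have "\<dots> = avg k (\<lambda>i. MM *v (Z (i - 1) - Z i))"
    unfolding avg_def using resid by (intro arg_cong[where f = "\<lambda>z. _ *\<^sub>R z"] sum.cong) auto
  also have "\<dots> = (1 / real k) *\<^sub>R (MM *v (Z 0 - Z k))"
    unfolding avg_def using telescope[of Z k] by (simp add: mv_sum[symmetric])
  finally show ?thesis .
qed

lemma eps_sum_id:
  assumes k: "k \<ge> 1"
  shows "eps_a k + zeta_a k = (1 / real k) * (\<Sum>i = 1..k. inner (MM *v (Z (i - 1) - Z i)) (Zt i - blk3 (avg k xt) (avg k y) (avg k \<gamma>t)))"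
proof -
  define xa where "xa = avg k xt"
  define ya where "ya = avg k y"
  define ga where "ga = avg k \<gamma>t"
  define wa where "wa = avg k w"
  have wa: "wa = A *v xa + B *v ya - b" using w_lin[OF k] unfolding wa_def xa_def ya_def .
  have hterm: "inner (u i + transpose A *v \<gamma>t i) (xt i - xa) + inner (v i + transpose B *v \<gamma>t i) (y i - ya)
      = inner (MM *v (Z (i - 1) - Z i)) (Zt i - blk3 xa ya ga) + (inner (w i) ga - inner (\<gamma>t i) wa)" if i: "i \<ge> 1" for i
  proof -
    have eA: "inner (transpose A *v \<gamma>t i) (xt i - xa) = inner (\<gamma>t i) (A *v (xt i - xa))"
      using adjA[of "transpose A" "\<gamma>t i" "xt i - xa"] by simp
    have eB: "inner (transpose B *v \<gamma>t i) (y i - ya) = inner (\<gamma>t i) (B *v (y i - ya))"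
      using adjA[of "transpose B" "\<gamma>t i" "y i - ya"] by simp
    have "A *v (xt i - xa) + B *v (y i - ya) = (A *v xt i + B *v y i - b) - (A *v xa + B *v ya - b)"
      by (simp add: matrix_vector_mult_diff_distrib algebra_simps)
    also have "\<dots> = w i - wa" using w_R[OF i] wa unfolding R_def by simp
    finally have ww: "A *v (xt i - xa) + B *v (y i - ya) = w i - wa" .
    have "inner (\<gamma>t i) (A *v (xt i - xa)) + inner (\<gamma>t i) (B *v (y i - ya)) = inner (\<gamma>t i) (w i) - inner (\<gamma>t i) wa"
      unfolding inner_add_right[symmetric] ww by (simp add: inner_diff_right)
    moreover have "inner (MM *v (Z (i - 1) - Z i)) (Zt i - blk3 xa ya ga)
        = inner (u i) (xt i - xa) + inner (v i) (y i - ya) + inner (w i) (\<gamma>t i - ga)"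
      unfolding resid[OF i] Zt_def blk3_diff blk3_inner ..
    moreover have "inner (u i + transpose A *v \<gamma>t i) (xt i - xa) = inner (u i) (xt i - xa) + inner (\<gamma>t i) (A *v (xt i - xa))"
      unfolding inner_add_left eA ..
    moreover have "inner (v i + transpose B *v \<gamma>t i) (y i - ya) = inner (v i) (y i - ya) + inner (\<gamma>t i) (B *v (y i - ya))"
      unfolding inner_add_left eB ..
    moreover have "inner (w i) (\<gamma>t i - ga) = inner (\<gamma>t i) (w i) - inner (w i) ga"
      by (simp add: inner_diff_right inner_commute)
    ultimately show ?thesis by linarith
  qed
  have S: "(\<Sum>i = 1..k. inner (w i) ga - inner (\<gamma>t i) wa) = 0"
  proof -
    have "(\<Sum>i = 1..k. inner (w i) ga) = inner (\<Sum>i = 1..k. w i) ga" by (simp add: inner_sum_left)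
    also have "\<dots> = real k * inner wa ga" unfolding sum_avg[OF k] wa_def by simp
    finally have 1: "(\<Sum>i = 1..k. inner (w i) ga) = real k * inner wa ga" .
    have "(\<Sum>i = 1..k. inner (\<gamma>t i) wa) = inner (\<Sum>i = 1..k. \<gamma>t i) wa" by (simp add: inner_sum_left)
    also have "\<dots> = real k * inner ga wa" unfolding sum_avg[OF k] ga_def by simp
    finally have 2: "(\<Sum>i = 1..k. inner (\<gamma>t i) wa) = real k * inner wa ga" by (simp add: inner_commute)
    show ?thesis using 1 2 by (simp add: sum_subtractf)
  qed
  have "eps_a k + zeta_a k = (1 / real k) * (\<Sum>i = 1..k. inner (u i + transpose A *v \<gamma>t i) (xt i - xa) + inner (v i + transpose B *v \<gamma>t i) (y i - ya))"
    unfolding eps_a_def zeta_a_def xa_def ya_def by (simp add: sum.distrib distrib_left)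
  also have "\<dots> = (1 / real k) * (\<Sum>i = 1..k. inner (MM *v (Z (i - 1) - Z i)) (Zt i - blk3 xa ya ga) + (inner (w i) ga - inner (\<gamma>t i) wa))"
    using hterm by (intro arg_cong[where f = "\<lambda>z. _ * z"] sum.cong) auto
  also have "\<dots> = (1 / real k) * (\<Sum>i = 1..k. inner (MM *v (Z (i - 1) - Z i)) (Zt i - blk3 xa ya ga))"
    using S by (simp add: sum.distrib)
  finally show ?thesis unfolding xa_def ya_def ga_def .
qed

end

context admm begin

lemma qn_neg: "qnorm2 MM (a - c) = qnorm2 MM (c - a)"
proof -
  have "a - c = (-1) *\<^sub>R (c - a)" by simp
  thus ?thesis using qn_scale[of MM "-1" "c - a"] by simp
qed

lemma sol_bounds:
  assumes s: "issol xs ys gs" and k: "k \<ge> 1"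
  defines "a0 \<equiv> qnorm2 MM (blk3 xs ys gs - blk3 (x 0) (y 0) (\<gamma> 0))"
  shows "norm (blk3 (avg k u) (avg k v) (avg k w)) \<le> 2 * sqrt (lambda_max MM * a0 * C2) / real k"
    and "eps_a k + zeta_a k \<le> 3 * a0 * ((3 - 2 * \<sigma>) * C2 / (1 - \<sigma>)) / (2 * real k)"
proof -
  define Zs where "Zs = blk3 xs ys gs"
  define aa where "aa i = qnorm2 MM (Zs - Z i)" for i
  have a0: "a0 = aa 0" unfolding a0_def aa_def Zs_def Z_def ..
  define et where "et i = (if i = 0 then (C2 - 1) * aa 0 else eta i)" for i
  have an: "aa i \<ge> 0" for i unfolding aa_def by (rule Mpsd)
  have Xn: "XX i \<ge> 0" for i unfolding XX_def by (rule Mpsd)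
  have en: "et i \<ge> 0" for i unfolding et_def using C2_ge an[of 0] eta_nn by auto
  have s0: "\<sigma> \<ge> 0" using sigma_range sh_range by simp
  have L1: "aa i \<le> aa (i - 1) - XX i + ee i" if i: "i \<ge> 1" for i
    using lyap[OF i, of Zs] mono_sol[OF s i] unfolding aa_def Zs_def by simp
  have L2: "ee i \<le> \<sigma> * XX i + et (i - 1) - et i" if i: "i \<ge> 1" for i
  proof (cases "i = 1")
    case True
    thus ?thesis using err_first[OF s] unfolding et_def aa_def Zs_def Z_def by simp
  next
    case False
    hence "i \<ge> 2" using i by simp
    thus ?thesis using err_step[of i] False unfolding et_def by simp
  qed
  define D where "D = aa 0 + et 0"
  have D: "D = C2 * aa 0" unfolding D_def et_def by (simp add: algebra_simps)
  have D0: "D \<ge> 0" using an[of 0] en[of 0] D_def by simp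
  have hp1: "aa i + et i \<le> D" for i unfolding D_def by (rule hpe_real(1)[where a=aa and XX=XX and ee=ee and eta=et and \<sigma>=\<sigma>, OF L1 L2 en an Xn sigma_range(2) s0])
  have hp2: "ee i \<le> D / (1 - \<sigma>)" if "i \<ge> 1" for i
    unfolding D_def by (rule hpe_real(2)[where a=aa and XX=XX and ee=ee and eta=et and \<sigma>=\<sigma>, OF L1 L2 en an Xn sigma_range(2) s0 that])
  have aD: "aa i \<le> D" for i using hp1[of i] en[of i] by simp
  have saD: "sqrt (aa i) \<le> sqrt D" for i using aD by simp
  have lam0: "lambda_max MM \<ge> 0" by (rule spectral(1)[OF Msym Mpsd])
  have sq: "sqrt (qnorm2 MM (Z 0 - Z k)) \<le> sqrt (qnorm2 MM (Z 0 - Zs)) + sqrt (qnorm2 MM (Zs - Z k))"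
    by (rule psd_diff_bound[OF Msym Mpsd])
  hence "sqrt (qnorm2 MM (Z 0 - Z k)) \<le> 2 * sqrt D"
    using saD[of 0, unfolded aa_def] saD[of k, unfolded aa_def] unfolding qn_neg[of "Z 0" Zs] by linarith
  hence "sqrt (qnorm2 MM (Z 0 - Z k)) \<le> sqrt (4 * D)" by (simp add: real_sqrt_mult)
  hence q4: "qnorm2 MM (Z 0 - Z k) \<le> 4 * D" using Mpsd by simp
  have "(norm (MM *v (Z 0 - Z k)))^2 \<le> lambda_max MM * qnorm2 MM (Z 0 - Z k)" by (rule spectral(2)[OF Msym Mpsd])
  also have "\<dots> \<le> lambda_max MM * (4 * D)" using q4 lam0 by (rule mult_left_mono)
  finally have "norm (MM *v (Z 0 - Z k)) \<le> sqrt (lambda_max MM * (4 * D))" by (simp add: real_le_rsqrt)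
  also have "\<dots> = 2 * sqrt (lambda_max MM * a0 * C2)"
  proof -
    have "lambda_max MM * (4 * D) = 2^2 * (lambda_max MM * a0 * C2)" using D a0 by (simp add: algebra_simps)
    hence "sqrt (lambda_max MM * (4 * D)) = sqrt (2^2) * sqrt (lambda_max MM * a0 * C2)"
      by (simp only: real_sqrt_mult)
    thus ?thesis by simp
  qed
  finally have nb: "norm (MM *v (Z 0 - Z k)) \<le> 2 * sqrt (lambda_max MM * a0 * C2)" .
  show "norm (blk3 (avg k u) (avg k v) (avg k w)) \<le> 2 * sqrt (lambda_max MM * a0 * C2) / real k"
    unfolding resid_avg[OF k] using nb k by (simp add: divide_right_mono)
  define P where "P = blk3 (avg k xt) (avg k y) (avg k \<gamma>t)"
  have PZ: "P - Zs = avg k (\<lambda>i. Zt i - Zs)"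
    unfolding P_def Zt_def avg_diff avg_blk3[symmetric] avg_const[OF k, of Zs] ..
  define bnd where "bnd = sqrt (D / (1 - \<sigma>)) + sqrt D"
  have bi: "sqrt (qnorm2 MM (Zt i - Zs)) \<le> bnd" if i: "1 \<le> i" "i \<le> k" for i
  proof -
    have "sqrt (qnorm2 MM (Zt i - Zs)) \<le> sqrt (qnorm2 MM (Zt i - Z i)) + sqrt (qnorm2 MM (Z i - Zs))"
      by (rule psd_diff_bound[OF Msym Mpsd])
    also have "\<dots> = sqrt (ee i) + sqrt (aa i)" unfolding ee_def aa_def qn_neg[of "Z i" Zs] ..
    also have "\<dots> \<le> bnd" unfolding bnd_def using hp2[OF i(1)] saD[of i] by (intro add_mono) auto
    finally show ?thesis .
  qed
  have qP: "sqrt (qnorm2 MM (P - Zs)) \<le> bnd" unfolding PZ by (rule psd_avg_bound[OF Msym Mpsd k bi])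
  have bnd0: "bnd \<ge> 0" using qP Mpsd[of "P - Zs"] by (meson order_trans real_sqrt_ge_zero)
  have per: "2 * inner (MM *v (Z (i - 1) - Z i)) (Zt i - P) = qnorm2 MM (P - Z (i - 1)) - qnorm2 MM (P - Z i) - XX i + ee i"
    if i: "i \<ge> 1" for i using lyap[OF i, of P] by simp
  have sum2: "2 * (\<Sum>i = 1..k. inner (MM *v (Z (i - 1) - Z i)) (Zt i - P))
      = (qnorm2 MM (P - Z 0) - qnorm2 MM (P - Z k)) + (\<Sum>i = 1..k. ee i - XX i)"
  proof -
    have "2 * (\<Sum>i = 1..k. inner (MM *v (Z (i - 1) - Z i)) (Zt i - P))
        = (\<Sum>i = 1..k. (qnorm2 MM (P - Z (i - 1)) - qnorm2 MM (P - Z i)) + (ee i - XX i))"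
      unfolding sum_distrib_left using per by (intro sum.cong) auto
    also have "\<dots> = (\<Sum>i = 1..k. qnorm2 MM (P - Z (i - 1)) - qnorm2 MM (P - Z i)) + (\<Sum>i = 1..k. ee i - XX i)"
      by (simp add: sum.distrib)
    also have "(\<Sum>i = 1..k. qnorm2 MM (P - Z (i - 1)) - qnorm2 MM (P - Z i)) = qnorm2 MM (P - Z 0) - qnorm2 MM (P - Z k)"
      using telescope[of "\<lambda>i. qnorm2 MM (P - Z i)" k] by simp
    finally show ?thesis .
  qed
  have se: "(\<Sum>i = 1..k. ee i - XX i) \<le> et 0"
  proof -
    have "(\<Sum>i = 1..k. ee i - XX i) \<le> (\<Sum>i = 1..k. et (i - 1) - et i)"
    proof (rule sum_mono)
      fix i assume "i \<in> {1..k}"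
      hence i: "i \<ge> 1" by simp
      have "\<sigma> * XX i \<le> XX i" using Xn[of i] sigma_range(2) by (simp add: mult_left_le_one_le s0)
      thus "ee i - XX i \<le> et (i - 1) - et i" using L2[OF i] by simp
    qed
    also have "\<dots> = et 0 - et k" using telescope[of et k] by simp
    finally show ?thesis using en[of k] by simp
  qed
  have qdiff: "qnorm2 MM (P - Z 0) - qnorm2 MM (P - Z k) \<le> aa 0 + 2 * bnd * (2 * sqrt D)"
  proof -
    have e0: "qnorm2 MM (P - Z 0) = qnorm2 MM (P - Zs) - 2 * inner (MM *v (P - Zs)) (Z 0 - Zs) + qnorm2 MM (Z 0 - Zs)"
      using qn_diff[OF Msym, of "P - Zs" "Z 0 - Zs"] by simp
    have ek: "qnorm2 MM (P - Z k) = qnorm2 MM (P - Zs) - 2 * inner (MM *v (P - Zs)) (Z k - Zs) + qnorm2 MM (Z k - Zs)"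
      using qn_diff[OF Msym, of "P - Zs" "Z k - Zs"] by simp
    have c0: "\<bar>inner (MM *v (P - Zs)) (Z 0 - Zs)\<bar> \<le> bnd * sqrt D"
    proof -
      have "\<bar>inner (MM *v (P - Zs)) (Z 0 - Zs)\<bar> \<le> sqrt (qnorm2 MM (P - Zs)) * sqrt (qnorm2 MM (Z 0 - Zs))"
        by (rule psd_CS_abs[OF Msym Mpsd])
      also have "\<dots> \<le> bnd * sqrt D"
      proof (rule mult_mono[OF qP])
        show "sqrt (qnorm2 MM (Z 0 - Zs)) \<le> sqrt D" using saD[of 0] unfolding aa_def qn_neg[of "Z 0" Zs] .
      qed (auto simp: bnd0 Mpsd)
      finally show ?thesis .
    qed
    have ck: "\<bar>inner (MM *v (P - Zs)) (Z k - Zs)\<bar> \<le> bnd * sqrt D"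
    proof -
      have "\<bar>inner (MM *v (P - Zs)) (Z k - Zs)\<bar> \<le> sqrt (qnorm2 MM (P - Zs)) * sqrt (qnorm2 MM (Z k - Zs))"
        by (rule psd_CS_abs[OF Msym Mpsd])
      also have "\<dots> \<le> bnd * sqrt D"
      proof (rule mult_mono[OF qP])
        show "sqrt (qnorm2 MM (Z k - Zs)) \<le> sqrt D" using saD[of k] unfolding aa_def qn_neg[of "Z k" Zs] .
      qed (auto simp: bnd0 Mpsd)
      finally show ?thesis .
    qed
    have "qnorm2 MM (Z 0 - Zs) = aa 0" unfolding aa_def qn_neg[of "Z 0" Zs] ..
    moreover have "qnorm2 MM (Z k - Zs) \<ge> 0" by (rule Mpsd)
    ultimately show ?thesis using e0 ek c0 ck by (simp add: abs_le_iff algebra_simps)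
  qed
  have tot: "2 * (\<Sum>i = 1..k. inner (MM *v (Z (i - 1) - Z i)) (Zt i - P)) \<le> D + 4 * bnd * sqrt D"
    using sum2 se qdiff unfolding D_def by simp
  also have "\<dots> \<le> 3 * (3 - 2 * \<sigma>) * D / (1 - \<sigma>)"
    using final_num[OF s0 sigma_range(2) D0] unfolding bnd_def by (simp add: algebra_simps)
  finally have tot1: "2 * (\<Sum>i = 1..k. inner (MM *v (Z (i - 1) - Z i)) (Zt i - P)) \<le> 3 * (3 - 2 * \<sigma>) * D / (1 - \<sigma>)" .
  have tot2: "(\<Sum>i = 1..k. inner (MM *v (Z (i - 1) - Z i)) (Zt i - P)) \<le> 3 * (3 - 2 * \<sigma>) * D / (1 - \<sigma>) / 2"
  proof -
    define Sg where "Sg = (\<Sum>i = 1..k. inner (MM *v (Z (i - 1) - Z i)) (Zt i - P))"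
    define Y where "Y = 3 * (3 - 2 * \<sigma>) * D / (1 - \<sigma>)"
    have "2 * Sg \<le> Y" using tot1 unfolding Sg_def Y_def .
    hence "Sg \<le> Y / 2" by linarith
    thus ?thesis unfolding Sg_def Y_def .
  qed
  have "eps_a k + zeta_a k = (1 / real k) * (\<Sum>i = 1..k. inner (MM *v (Z (i - 1) - Z i)) (Zt i - P))"
    unfolding P_def by (rule eps_sum_id[OF k])
  also have "\<dots> \<le> (1 / real k) * (3 * (3 - 2 * \<sigma>) * D / (1 - \<sigma>) / 2)"
    using tot2 k by (intro mult_left_mono) auto
  also have "\<dots> = 3 * a0 * ((3 - 2 * \<sigma>) * C2 / (1 - \<sigma>)) / (2 * real k)"
    unfolding D a0 by (simp add: field_simps)
  finally show "eps_a k + zeta_a k \<le> 3 * a0 * ((3 - 2 * \<sigma>) * C2 / (1 - \<sigma>)) / (2 * real k)" .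
qed

end

theorem theorem2p11:
  fixes f :: "real^'n \<Rightarrow> ereal" and g :: "real^'p \<Rightarrow> ereal"
    and A :: "real^'n^'m" and B :: "real^'p^'m" and b :: "real^'m"
    and G :: "real^'n^'n" and H :: "real^'p^'p"
    and \<beta> st sh \<tau> \<theta> \<sigma> :: real
    and x :: "nat \<Rightarrow> real^'n" and y :: "nat \<Rightarrow> real^'p" and \<gamma> :: "nat \<Rightarrow> real^'m"
    and xt :: "nat \<Rightarrow> real^'n" and u :: "nat \<Rightarrow> real^'n"
    and \<gamma>t :: "nat \<Rightarrow> real^'m" and \<gamma>h :: "nat \<Rightarrow> real^'m"
    and v :: "nat \<Rightarrow> real^'p" and w :: "nat \<Rightarrow> real^'m"
    and M :: "real^('n + 'p + 'm)^('n + 'p + 'm)"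
    and d0 :: real and k :: nat
  assumes f_pcc: "proper_closed_convex f" and g_pcc: "proper_closed_convex g"
    and sol_exists: "\<exists>xs ys gs. 0 \<in> (\<lambda>s. s - transpose A *v gs) ` subdiff f xs
                        \<and> 0 \<in> (\<lambda>s. s - transpose B *v gs) ` subdiff g ys
                        \<and> A *v xs + B *v ys - b = 0"
    and beta_pos: "\<beta> > 0"
    and st_range: "0 \<le> st" "st < 1" and sh_range: "0 \<le> sh" "sh < 1"
    and G_pd: "sym_pd G" and H_psd: "sym_psd H"
    and tau_theta: "(\<tau>, \<theta>) \<in> region_R st"
    \<comment> \<open>the algorithm, for every iteration k \<ge> 1\<close>
    and gt_def: "\<And>i. i \<ge> 1 \<Longrightarrow> \<gamma>t i = \<gamma> (i - 1) - \<beta> *\<^sub>R (A *v xt i + B *v y (i - 1) - b)"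
    and u_incl: "\<And>i. i \<ge> 1 \<Longrightarrow> u i \<in> (\<lambda>s. s - transpose A *v \<gamma>t i) ` subdiff f (xt i)"
    and inexact: "\<And>i. i \<ge> 1 \<Longrightarrow>
        qnorm2 G (xt i - x (i - 1) + matrix_inv G *v u i)
          \<le> st / \<beta> * (norm (\<gamma>t i - \<gamma> (i - 1)))^2 + sh * qnorm2 G (xt i - x (i - 1))"
    and gh_def: "\<And>i. i \<ge> 1 \<Longrightarrow> \<gamma>h i = \<gamma> (i - 1) - (\<tau> * \<beta>) *\<^sub>R (A *v xt i + B *v y (i - 1) - b)"
    and y_opt: "\<And>i y'. i \<ge> 1 \<Longrightarrow>
        g (y i) - ereal (inner (\<gamma>h i) (B *v y i))
          + ereal (\<beta> / 2 * (norm (A *v xt i + B *v y i - b))^2 + 1 / 2 * qnorm2 H (y i - y (i - 1)))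
        \<le> g y' - ereal (inner (\<gamma>h i) (B *v y'))
          + ereal (\<beta> / 2 * (norm (A *v xt i + B *v y' - b))^2 + 1 / 2 * qnorm2 H (y' - y (i - 1)))"
    and x_upd: "\<And>i. i \<ge> 1 \<Longrightarrow> x i = x (i - 1) - matrix_inv G *v u i"
    and g_upd: "\<And>i. i \<ge> 1 \<Longrightarrow> \<gamma> i = \<gamma>h i - (\<theta> * \<beta>) *\<^sub>R (A *v xt i + B *v y i - b)"
    \<comment> \<open>residual quantities v_i, w_i\<close>
    and v_def: "\<And>i. v i = (H + (((\<tau> - \<tau> * \<theta> + \<theta>) * \<beta>) / (\<tau> + \<theta>)) *\<^sub>R (transpose B ** B)) *v (y (i - 1) - y i)
                       - (\<tau> / (\<tau> + \<theta>)) *\<^sub>R (transpose B *v (\<gamma> (i - 1) - \<gamma> i))"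
    and w_def: "\<And>i. w i = - ((\<tau> / (\<tau> + \<theta>)) *\<^sub>R (B *v (y (i - 1) - y i)))
                       + (1 / ((\<tau> + \<theta>) * \<beta>)) *\<^sub>R (\<gamma> (i - 1) - \<gamma> i)"
    and M_def: "M = Mmat G H B \<beta> \<tau> \<theta>"
    and d0_def: "d0 = Inf {qnorm2 M (blk3 xs ys gs - blk3 (x 0) (y 0) (\<gamma> 0)) | xs ys gs.
                     0 \<in> (\<lambda>s. s - transpose A *v gs) ` subdiff f xs
                   \<and> 0 \<in> (\<lambda>s. s - transpose B *v gs) ` subdiff g ys
                   \<and> A *v xs + B *v ys - b = 0}"
    and sigma_range: "sh \<le> \<sigma>" "\<sigma> < 1"
    and phi_conds: "phi st \<tau> \<theta> \<sigma> \<ge> 0" "phi_hat st \<tau> \<theta> \<sigma> \<ge> 0"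
                   "phi_tilde st \<tau> \<theta> \<sigma> > 0" "phi_bar st \<tau> \<theta> \<sigma> \<ge> 0"
    and k_pos: "k \<ge> 1"
  shows "let xta = avg k xt; ya = avg k y; gta = avg k \<gamma>t;
             ua = avg k u; va = avg k v; wa = avg k w;
             \<epsilon>a = (1 / real k) * (\<Sum>i = 1..k. inner (u i + transpose A *v \<gamma>t i) (xt i - xta));
             \<zeta>a = (1 / real k) * (\<Sum>i = 1..k. inner (v i + transpose B *v \<gamma>t i) (y i - ya));
             vth = vartheta st \<tau> \<theta>;
             C2 = 1 + 4 * (1 + \<tau> + vth) * phi st \<tau> \<theta> \<sigma> / ((\<tau> + \<theta>) * (1 + \<tau>) * vth);
             C3 = (3 - 2 * \<sigma>) * C2 / (1 - \<sigma>)
         in \<epsilon>a \<ge> 0 \<and> \<zeta>a \<ge> 0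
          \<and> ua \<in> (\<lambda>s. s - transpose A *v gta) ` eps_subdiff f \<epsilon>a xta
          \<and> va \<in> (\<lambda>s. s - transpose B *v gta) ` eps_subdiff g \<zeta>a ya
          \<and> wa = A *v xta + B *v ya - b
          \<and> max (norm ua) (max (norm va) (norm wa)) \<le> 2 * sqrt (lambda_max M * d0 * C2) / real k
          \<and> max \<epsilon>a \<zeta>a \<le> 3 * d0 * C3 / (2 * real k)"
proof -
  interpret L: admm f g A B b G H \<beta> st sh \<tau> \<theta> \<sigma> x y \<gamma> xt u \<gamma>t \<gamma>h v w
    using f_pcc g_pcc beta_pos st_range sh_range G_pd H_psd tau_theta gt_def u_incl inexact gh_def y_opt
      x_upd g_upd v_def w_def sigma_range phi_conds
    by (unfold_locales) auto
  have MM: "M = L.MM" using M_def .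
  define S where "S = {qnorm2 M (blk3 xs ys gs - blk3 (x 0) (y 0) (\<gamma> 0)) | xs ys gs.
                     0 \<in> (\<lambda>s. s - transpose A *v gs) ` subdiff f xs
                   \<and> 0 \<in> (\<lambda>s. s - transpose B *v gs) ` subdiff g ys
                   \<and> A *v xs + B *v ys - b = 0}"
  have zimg: "0 \<in> (\<lambda>s. s - c) ` X \<longleftrightarrow> c \<in> X" for c :: "'q::ab_group_add" and X
  proof
    assume "0 \<in> (\<lambda>s. s - c) ` X"
    then obtain s where "s \<in> X" "0 = s - c" by blast
    thus "c \<in> X" by simp
  next
    assume "c \<in> X" thus "0 \<in> (\<lambda>s. s - c) ` X" by (intro image_eqI[of _ _ c]) auto
  qed
  have S_sol: "a \<in> S \<Longrightarrow> \<exists>xs ys gs. L.issol xs ys gs \<and> a = qnorm2 L.MM (blk3 xs ys gs - blk3 (x 0) (y 0) (\<gamma> 0))" for a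
    unfolding S_def L.issol_def zimg MM by blast
  have S_ne: "S \<noteq> {}" using sol_exists unfolding S_def by blast
  have S_nn: "a \<in> S \<Longrightarrow> a \<ge> 0" for a using S_sol L.Mpsd by blast
  have d0S: "d0 = Inf S" unfolding d0_def S_def ..
  have d0_nn: "d0 \<ge> 0" unfolding d0S using S_ne S_nn by (intro cInf_greatest) auto
  have d0_lb: "(\<And>a. a \<in> S \<Longrightarrow> c \<le> a) \<Longrightarrow> c \<le> d0" for c unfolding d0S using S_ne by (intro cInf_greatest) auto
  have C2: "L.C2 = 1 + 4 * (1 + \<tau> + vartheta st \<tau> \<theta>) * phi st \<tau> \<theta> \<sigma> / ((\<tau> + \<theta>) * (1 + \<tau>) * vartheta st \<tau> \<theta>)"
    unfolding L.C2_def ..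
  have kr: "real k > 0" using k_pos by simp
  have fin1: "L.eps_a k \<ge> 0 \<and> avg k u \<in> (\<lambda>s. s - transpose A *v avg k \<gamma>t) ` eps_subdiff f (L.eps_a k) (avg k xt)"
    by (rule L.incl_f[OF k_pos])
  have fin2: "L.zeta_a k \<ge> 0 \<and> avg k v \<in> (\<lambda>s. s - transpose B *v avg k \<gamma>t) ` eps_subdiff g (L.zeta_a k) (avg k y)"
    by (rule L.incl_g[OF k_pos])
  have wl: "avg k w = A *v avg k xt + B *v avg k y - b" by (rule L.w_lin[OF k_pos])
  define X where "X = max (norm (avg k u)) (max (norm (avg k v)) (norm (avg k w)))"
  have Xb: "X \<le> norm (blk3 (avg k u) (avg k v) (avg k w))" unfolding X_def using norm_blk3_comp by auto
  have X0: "X \<ge> 0" unfolding X_def by (meson max.coboundedI1 norm_ge_zero)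
  have lam0: "lambda_max M \<ge> 0" unfolding MM by (rule spectral(1)[OF L.Msym L.Mpsd])
  have C21: "L.C2 \<ge> 1" by (rule L.C2_ge)
  define c where "c = lambda_max M * L.C2"
  have c0: "c \<ge> 0" unfolding c_def using lam0 C21 by simp
  have Xa: "(real k * X / 2)^2 \<le> c * a" if a: "a \<in> S" for a
  proof -
    obtain xs ys gs where s: "L.issol xs ys gs" and ae: "a = qnorm2 L.MM (blk3 xs ys gs - blk3 (x 0) (y 0) (\<gamma> 0))"
      using S_sol[OF a] by blast
    have "X \<le> 2 * sqrt (lambda_max L.MM * a * L.C2) / real k"
      using Xb L.sol_bounds(1)[OF s k_pos] unfolding ae by linarith
    hence "real k * X / 2 \<le> sqrt (c * a)" using kr unfolding c_def MM by (simp add: field_simps)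
    moreover have "real k * X / 2 \<ge> 0" using X0 kr by simp
    ultimately have "(real k * X / 2)^2 \<le> (sqrt (c * a))^2" by (intro power_mono) auto
    also have "\<dots> = c * a" using c0 S_nn[OF a] by simp
    finally show ?thesis .
  qed
  have Xfin: "X \<le> 2 * sqrt (lambda_max M * d0 * L.C2) / real k"
  proof (cases "c = 0")
    case True
    then obtain a where "a \<in> S" using S_ne by blast
    hence "(real k * X / 2)^2 \<le> 0" using Xa True by force
    hence "X = 0" using kr by simp
    thus ?thesis using lam0 d0_nn C21 kr by simp
  next
    case False
    hence cp: "c > 0" using c0 by simp
    have "(real k * X / 2)^2 / c \<le> d0"
      using Xa cp by (intro d0_lb) (simp add: divide_le_eq mult.commute)
    hence "(real k * X / 2)^2 \<le> c * d0" using cp by (simp add: divide_le_eq mult.commute)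
    hence "sqrt ((real k * X / 2)^2) \<le> sqrt (c * d0)" by (rule real_sqrt_le_mono)
    hence "real k * X / 2 \<le> sqrt (c * d0)" using X0 kr by simp
    thus ?thesis using kr unfolding c_def by (simp add: field_simps)
  qed
  define C3 where "C3 = (3 - 2 * \<sigma>) * L.C2 / (1 - \<sigma>)"
  have C3p: "C3 > 0" unfolding C3_def using C21 sigma_range by simp
  define E where "E = L.eps_a k + L.zeta_a k"
  have Ea: "E \<le> 3 * a * C3 / (2 * real k)" if a: "a \<in> S" for a
  proof -
    obtain xs ys gs where s: "L.issol xs ys gs" and ae: "a = qnorm2 L.MM (blk3 xs ys gs - blk3 (x 0) (y 0) (\<gamma> 0))"
      using S_sol[OF a] by blast
    show ?thesis using L.sol_bounds(2)[OF s k_pos] unfolding E_def C3_def ae by simp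
  qed
  have Efin: "E \<le> 3 * d0 * C3 / (2 * real k)"
  proof -
    have "E * (2 * real k) / (3 * C3) \<le> d0"
    proof (rule d0_lb)
      fix a assume a: "a \<in> S"
      have "E \<le> 3 * a * C3 / (2 * real k)" by (rule Ea[OF a])
      thus "E * (2 * real k) / (3 * C3) \<le> a" using kr C3p by (simp add: field_simps)
    qed
    thus ?thesis using kr C3p by (simp add: field_simps)
  qed
  have epsmax: "max (L.eps_a k) (L.zeta_a k) \<le> E" unfolding E_def using fin1 fin2 by simp
  show ?thesis
    unfolding Let_def
    using fin1 fin2 wl Xfin Efin epsmax
    unfolding L.eps_a_def[symmetric] L.zeta_a_def[symmetric] X_def[symmetric] C2[symmetric] C3_def[symmetric]
    by (simp add: L.eps_a_def L.zeta_a_def)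
qed

end
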